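(* Let $d\ge1$, let $\mathcal{C}$ be the standard middle-thirds Cantor set and $\mathcal{K}=\mathcal{C}^d\subseteq\mathbb{R}^d$. Let $s=\dim_H(\mathcal{K})$ and let $\mu_{\mathcal{K}}$ be the restriction to $\mathcal{K}$ of the $s$-dimensional Hausdorff measure. Then $$\varpi:=\min_{1\le l\le d}\alpha_l(\mu_{\mathcal{K}})\,(d-l+1)=s=d\,\frac{\log2}{\log3}.$$
   Context: For a compactly supported Borel measure $\nu$ on $\mathbb{R}^d$ and $1\le l\le d$, let $\mathcal{A}(d,d-l)$ be the set of affine subspaces of $\mathbb{R}^d$ of dimension $d-l$, $\mathcal{L}^{(\varepsilon)}$ the open Euclidean $\varepsilon$-neighborhood of $\mathcal{L}$, and $$\alpha_l(\nu):=\liminf_{\varepsilon\to0}\frac{\log\sup_{\mathcal{L}\in\mathcal{A}(d,d-l)}\nu(\mathcal{L}^{(\varepsilon)})}{\log\varepsilon}.$$ *)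

theory Defs
  imports "HOL-Analysis.Analysis"
begin

definition cantor_set :: "real set" where
  "cantor_set = {x. \<exists>a::nat \<Rightarrow> nat. (\<forall>i. a i \<in> {0, 2}) \<and> x = (\<Sum>i. real (a i) / 3 ^ (i + 1))}"

text \<open>The d-fold product of the Cantor set, as a subset of real^'n (d = CARD('n)).\<close>
definition cantor_dust :: "(real ^ 'n) set" where
  "cantor_dust = {x. \<forall>i. x $ i \<in> cantor_set}"

text \<open>delta-approximation of the (unnormalised) s-dimensional Hausdorff outer measure.\<close>
definition hausdorff_pre :: "real \<Rightarrow> real \<Rightarrow> ('a::metric_space) set \<Rightarrow> ennreal" where
  "hausdorff_pre s \<delta> A = (INF U\<in>{U :: nat \<Rightarrow> 'a set. A \<subseteq> (\<Union>i. U i) \<and>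
        (\<forall>i. bounded (U i) \<and> diameter (U i) \<le> \<delta>)}.
        (\<Sum>i. ennreal (diameter (U i) powr s)))"

definition hausdorff_measure :: "real \<Rightarrow> ('a::metric_space) set \<Rightarrow> ennreal" where
  "hausdorff_measure s A = (SUP \<delta>\<in>{0<..}. hausdorff_pre s \<delta> A)"

definition hausdorff_dim :: "('a::metric_space) set \<Rightarrow> real" where
  "hausdorff_dim A = Inf {s. s \<ge> 0 \<and> hausdorff_measure s A = 0}"

definition affine_subspaces :: "nat \<Rightarrow> ('a::euclidean_space) set set" where
  "affine_subspaces k = {L. affine L \<and> L \<noteq> {} \<and> aff_dim L = int k}"

definition nbhd :: "('a::metric_space) set \<Rightarrow> real \<Rightarrow> 'a set" where
  "nbhd L \<epsilon> = (\<Union>y\<in>L. ball y \<epsilon>)"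

definition alpha :: "nat \<Rightarrow> (('a::euclidean_space) set \<Rightarrow> ennreal) \<Rightarrow> ereal" where
  "alpha l \<nu> = Liminf (at_right 0) (\<lambda>\<epsilon>::real.
      ereal (ln (enn2real (SUP L\<in>affine_subspaces (DIM('a) - l). \<nu> (nbhd L \<epsilon>))) / ln \<epsilon>))"

end

theory Submission
  imports Defs
begin


definition tdig :: "nat set \<Rightarrow> nat \<Rightarrow> real" where
  "tdig B i = (if i \<in> B then 2 else 0) / 3 ^ Suc i"

definition cval :: "nat set \<Rightarrow> real" where
  "cval B = (\<Sum>i. tdig B i)"

lemma tdig_nonneg: "0 \<le> tdig B i"
  by (simp add: tdig_def)

lemma tdig_le: "tdig B i \<le> 2 / 3 ^ Suc i"
  by (simp add: tdig_def divide_right_mono)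

lemma summable_geo3: "summable (\<lambda>i. 2 / (3::real) ^ Suc (i + m))"
proof -
  have "(\<lambda>i. 2 / (3::real) ^ Suc (i + m)) = (\<lambda>i. (2 / 3 ^ Suc m) * (1/3) ^ i)"
    by (auto simp: power_add field_simps)
  then show ?thesis by (simp add: summable_geometric)
qed

lemma suminf_geo3: "(\<Sum>i. 2 / (3::real) ^ Suc (i + m)) = 1 / 3 ^ m"
proof -
  have "(\<lambda>i. 2 / (3::real) ^ Suc (i + m)) = (\<lambda>i. (2 / 3 ^ Suc m) * (1/3) ^ i)"
    by (auto simp: power_add field_simps)
  moreover have "(\<Sum>i. (2 / 3 ^ Suc m) * ((1::real)/3) ^ i) = (2 / 3 ^ Suc m) * (3/2)"
    by (subst suminf_mult) (auto simp: suminf_geometric summable_geometric)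
  ultimately show ?thesis by simp
qed

lemma summable_tdig_shift: "summable (\<lambda>i. tdig B (i + m))"
proof (rule summable_comparison_test[OF _ summable_geo3[of m]])
  show "\<exists>N. \<forall>n\<ge>N. norm (tdig B (n + m)) \<le> 2 / 3 ^ Suc (n + m)"
    using tdig_le[of B] tdig_nonneg[of B] by (intro exI[of _ 0]) auto
qed

lemma summable_tdig: "summable (tdig B)"
  using summable_tdig_shift[of B 0] by simp

lemma tail_nonneg: "0 \<le> (\<Sum>i. tdig B (i + m))"
  by (intro suminf_nonneg summable_tdig_shift tdig_nonneg)

lemma tail_le: "(\<Sum>i. tdig B (i + m)) \<le> 1 / 3 ^ m"
proof -
  have "(\<Sum>i. tdig B (i + m)) \<le> (\<Sum>i. 2 / (3::real) ^ Suc (i + m))"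
    by (intro suminf_le summable_tdig_shift summable_geo3 tdig_le)
  then show ?thesis using suminf_geo3[of m] by simp
qed

lemma cval_split: "cval B = (\<Sum>i<m. tdig B i) + (\<Sum>i. tdig B (i + m))"
  unfolding cval_def using suminf_split_initial_segment[OF summable_tdig, of B m] by simp

lemma cval_trunc: "cval (B \<inter> {..<m}) = (\<Sum>i<m. tdig B i)"
proof -
  have "cval (B \<inter> {..<m}) = (\<Sum>i<m. tdig (B \<inter> {..<m}) i)"
    unfolding cval_def by (rule suminf_finite) (auto simp: tdig_def)
  also have "\<dots> = (\<Sum>i<m. tdig B i)"
    by (rule sum.cong) (auto simp: tdig_def)
  finally show ?thesis .
qed

lemma cval_trunc_bounds:
  "cval (B \<inter> {..<m}) \<le> cval B" "cval B \<le> cval (B \<inter> {..<m}) + 1 / 3 ^ m"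
  using cval_split[of B m] cval_trunc[of B m] tail_nonneg[of B m] tail_le[of B m] by auto

lemma cval_nonneg: "0 \<le> cval B"
  using cval_trunc_bounds(1)[of B 0] cval_trunc[of B 0] by simp

lemma cval_le1: "cval B \<le> 1"
  using cval_trunc_bounds(2)[of B 0] cval_trunc[of B 0] by simp

lemma sep_aux:
  assumes "j \<in> B" "j \<notin> B'" "B \<inter> {..<j} = B' \<inter> {..<j}"
  shows "cval B' + 1 / 3 ^ Suc j \<le> cval B"
proof -
  have e: "(\<Sum>i<j. tdig B i) = (\<Sum>i<j. tdig B' i)"
    using cval_trunc[of B j] cval_trunc[of B' j] assms(3) by simp
  have "cval B = (\<Sum>i<j. tdig B i) + tdig B j + (\<Sum>i. tdig B (i + Suc j))"
    using cval_split[of B "Suc j"] by simp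
  moreover have "cval B' = (\<Sum>i<j. tdig B' i) + tdig B' j + (\<Sum>i. tdig B' (i + Suc j))"
    using cval_split[of B' "Suc j"] by simp
  moreover have "tdig B j = 2 * (1 / 3 ^ Suc j)" "tdig B' j = 0" using assms by (auto simp: tdig_def)
  moreover note tail_nonneg[of B "Suc j"] tail_le[of B' "Suc j"]
  ultimately show ?thesis using e by linarith
qed

lemma cval_sep:
  assumes "B \<inter> {..<k} \<noteq> B' \<inter> {..<k}"
  shows "1 / 3 ^ k \<le> \<bar>cval B - cval B'\<bar>"
proof -
  define D where "D = {i. i < k \<and> (i \<in> B \<longleftrightarrow> i \<notin> B')}"
  have "D \<noteq> {}" using assms unfolding D_def by auto
  define j where "j = Min D"
  have fD: "finite D" unfolding D_def by auto
  have jD: "j \<in> D" using Min_in[OF fD \<open>D \<noteq> {}\<close>] j_def by simp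
  have jmin: "\<And>i. i < j \<Longrightarrow> (i \<in> B \<longleftrightarrow> i \<in> B')"
  proof (rule ccontr)
    fix i assume "i < j" "\<not> (i \<in> B \<longleftrightarrow> i \<in> B')"
    then have "i \<in> D" using jD unfolding D_def by auto
    then have "j \<le> i" using Min_le[OF fD] j_def by simp
    with \<open>i < j\<close> show False by simp
  qed
  have eq: "B \<inter> {..<j} = B' \<inter> {..<j}" using jmin by auto
  have jk: "Suc j \<le> k" using jD unfolding D_def by auto
  have p: "1 / (3::real) ^ k \<le> 1 / 3 ^ Suc j"
    using jk by (intro divide_left_mono power_increasing) auto
  show ?thesis
  proof (cases "j \<in> B")
    case True
    then have "j \<notin> B'" using jD unfolding D_def by auto
    from sep_aux[OF True this eq] p show ?thesis by linarith
  next
    case False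
    then have "j \<in> B'" using jD unfolding D_def by auto
    from sep_aux[OF this False eq[symmetric]] p show ?thesis by linarith
  qed
qed



lemma cantor_set_eq: "cantor_set = range cval"
proof
  show "cantor_set \<subseteq> range cval"
  proof
    fix x assume "x \<in> cantor_set"
    then obtain a :: "nat \<Rightarrow> nat" where a: "\<forall>i. a i \<in> {0,2}" "x = (\<Sum>i. real (a i) / 3 ^ (i + 1))"
      unfolding cantor_set_def by auto
    have "(\<lambda>i. real (a i) / 3 ^ (i + 1)) = tdig {i. a i = 2}"
      using a(1) by (auto simp: tdig_def fun_eq_iff)
    then show "x \<in> range cval" using a(2) unfolding cval_def by auto
  qed
next
  show "range cval \<subseteq> cantor_set"
  proof
    fix x assume "x \<in> range cval"
    then obtain B where B: "x = cval B" by auto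
    define a where "a i = (if i \<in> B then 2 else 0::nat)" for i
    have "(\<lambda>i. real (a i) / 3 ^ (i + 1)) = tdig B"
      by (auto simp: tdig_def fun_eq_iff a_def)
    then show "x \<in> cantor_set" unfolding cantor_set_def cval_def B
      by (intro CollectI exI[of _ a]) (auto simp: a_def)
  qed
qed

definition Fser :: "(nat \<Rightarrow> real) \<Rightarrow> real" where
  "Fser f = (\<Sum>i. f i / 3 ^ Suc i)"

definition Dig :: "(nat \<Rightarrow> real) set" where
  "Dig = {f. \<forall>i. f i \<in> {0,2}}"

lemma compact_Dig: "compact Dig"
proof -
  have "Dig = PiE UNIV (\<lambda>_. {0,2})"
    unfolding Dig_def PiE_UNIV_domain by auto
  moreover have "compactin (product_topology (\<lambda>i. euclidean) UNIV) (PiE (UNIV::nat set) (\<lambda>_. {0::real,2}))"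
    by (subst compactin_PiE) auto
  ultimately show ?thesis
    by (simp add: euclidean_product_topology)
qed

lemma cont_Fser: "continuous_on Dig Fser"
proof -
  have ul: "uniform_limit Dig (\<lambda>n f. \<Sum>i<n. f i / 3 ^ Suc i) (\<lambda>f. \<Sum>i. f i / 3 ^ Suc i) sequentially"
  proof (rule Weierstrass_m_test)
    show "summable (\<lambda>i. 2 / (3::real) ^ Suc (i + 0))" by (rule summable_geo3)
    fix n and f :: "nat \<Rightarrow> real" assume "f \<in> Dig"
    then have "f n \<in> {0,2}" unfolding Dig_def by auto
    then show "norm (f n / 3 ^ Suc n) \<le> 2 / 3 ^ Suc (n + 0)" by auto
  qed
  have c: "\<forall>\<^sub>F n in sequentially. continuous_on Dig (\<lambda>f. \<Sum>i<n. f i / 3 ^ Suc i)"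
    by (intro always_eventually allI continuous_intros continuous_on_subset[OF continuous_on_product_coordinates]) auto
  show ?thesis unfolding Fser_def
    by (rule uniform_limit_theorem[OF c ul]) simp
qed

lemma cantor_set_Fser: "cantor_set = Fser ` Dig"
proof -
  have "range cval = Fser ` Dig"
  proof
    show "range cval \<subseteq> Fser ` Dig"
    proof
      fix x assume "x \<in> range cval"
      then obtain B where B: "x = cval B" by auto
      define f where "f i = (if i \<in> B then 2 else 0::real)" for i
      have "f \<in> Dig" unfolding Dig_def f_def by auto
      moreover have "x = Fser f" unfolding B cval_def Fser_def f_def tdig_def by simp
      ultimately show "x \<in> Fser ` Dig" by auto
    qed
    show "Fser ` Dig \<subseteq> range cval"
    proof
      fix x assume "x \<in> Fser ` Dig"
      then obtain f where f: "f \<in> Dig" "x = Fser f" by auto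
      have "(\<lambda>i. f i / 3 ^ Suc i) = tdig {i. f i = 2}"
        using f(1) unfolding Dig_def by (auto simp: tdig_def fun_eq_iff)
      then show "x \<in> range cval" using f(2) unfolding Fser_def cval_def by auto
    qed
  qed
  then show ?thesis using cantor_set_eq by simp
qed

lemma compact_cantor_set: "compact cantor_set"
  unfolding cantor_set_Fser by (intro compact_continuous_image cont_Fser compact_Dig)

lemma cantor_dust_closed: "closed (cantor_dust :: (real^'n) set)"
proof -
  have "closed {x::real^'n. x $ i \<in> cantor_set}" for i
    using continuous_closed_vimage[OF compact_imp_closed[OF compact_cantor_set], of "\<lambda>x::real^'n. x $ i"]
    by (simp add: vimage_def continuous_on_component)
  then show ?thesis unfolding cantor_dust_def by (intro closed_Collect_all) 
qed

lemma cantor_dust_compact: "compact (cantor_dust :: (real^'n) set)"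
proof -
  have "cantor_dust \<subseteq> cbox (0::real^'n) 1"
    unfolding cantor_dust_def cantor_set_eq
    by (auto simp: mem_box_cart) (metis cval_nonneg rangeE, metis cval_le1 rangeE)
  then have "bounded (cantor_dust :: (real^'n) set)" using bounded_cbox bounded_subset by blast
  then show ?thesis using cantor_dust_closed compact_eq_bounded_closed by blast
qed



lemma card_fibers_le:
  assumes "finite A" "\<And>y. y \<in> f ` A \<Longrightarrow> card {x\<in>A. f x = y} \<le> b"
  shows "card A \<le> card (f ` A) * b"
proof -
  have "card A \<le> card (\<Union>y\<in>f ` A. {x\<in>A. f x = y})"
    by (rule card_mono) (use assms(1) in auto)
  also have "\<dots> \<le> (\<Sum>y\<in>f ` A. card {x\<in>A. f x = y})"
    by (rule card_UN_le) (use assms(1) in auto)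
  also have "\<dots> \<le> card (f ` A) * b"
    using sum_bounded_above[of "f ` A" "\<lambda>y. card {x\<in>A. f x = y}" b] assms(2) by auto
  finally show ?thesis .
qed

definition dig :: "real \<Rightarrow> nat set" where
  "dig x = (SOME B. x = cval B)"

lemma cval_dig: "x \<in> cantor_set \<Longrightarrow> cval (dig x) = x"
proof -
  assume "x \<in> cantor_set"
  then obtain B where "x = cval B" unfolding cantor_set_eq by auto
  then have "x = cval (SOME B. x = cval B)" by (rule someI)
  then show ?thesis unfolding dig_def by simp
qed

definition addr :: "nat \<Rightarrow> real^'n \<Rightarrow> ('n \<Rightarrow> nat set)" where
  "addr n x = (\<lambda>i. dig (x $ i) \<inter> {..<n})"

definition cube :: "nat \<Rightarrow> ('n \<Rightarrow> nat set) \<Rightarrow> (real^'n) set" where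
  "cube n \<beta> = {x. \<forall>i. cval (\<beta> i) \<le> x $ i \<and> x $ i \<le> cval (\<beta> i) + 1 / 3 ^ n}"

definition Addr :: "nat \<Rightarrow> ('n::finite \<Rightarrow> nat set) set" where
  "Addr n = {\<beta>. \<forall>i. \<beta> i \<subseteq> {..<n}}"

lemma in_cube_addr:
  assumes "x \<in> cantor_dust" shows "x \<in> cube n (addr n x)"
proof -
  have "x $ i \<in> cantor_set" for i using assms unfolding cantor_dust_def by auto
  then have "cval (dig (x $ i) \<inter> {..<n}) \<le> x $ i \<and> x $ i \<le> cval (dig (x $ i) \<inter> {..<n}) + 1 / 3 ^ n" for i
    using cval_trunc_bounds[of "dig (x $ i)" n] cval_dig[of "x $ i"] by simp
  then show ?thesis unfolding cube_def addr_def by simp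
qed

lemma addr_in_Addr: "addr n x \<in> Addr n"
  unfolding addr_def Addr_def by auto

lemma Addr_eq: "Addr n = Pi UNIV (\<lambda>_. Pow {..<n})"
  unfolding Addr_def by auto

lemma finite_Addr: "finite (Addr n :: ('n::finite \<Rightarrow> nat set) set)"
  unfolding Addr_eq PiE_UNIV_domain[symmetric] by (intro finite_PiE) auto

lemma card_Addr: "card (Addr n :: ('n::finite \<Rightarrow> nat set) set) = 2 ^ (n * CARD('n))"
  unfolding Addr_eq PiE_UNIV_domain[symmetric]
  by (subst card_PiE) (auto simp: card_Pow power_mult)

lemma card_ext_le:
  fixes \<gamma> :: "'n::finite \<Rightarrow> nat set"
  assumes "k \<le> N"
  shows "card {\<alpha> \<in> Addr N. \<forall>i. \<alpha> i \<inter> {..<k} = \<gamma> i} \<le> 2 ^ ((N - k) * CARD('n))"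
proof -
  let ?S = "{\<alpha> \<in> Addr N. \<forall>i. \<alpha> i \<inter> {..<k} = (\<gamma> i :: nat set)} :: ('n \<Rightarrow> nat set) set"
  let ?g = "\<lambda>\<alpha>::'n \<Rightarrow> nat set. \<lambda>i. \<alpha> i \<inter> {k..<N}"
  have inj: "inj_on ?g ?S"
  proof (rule inj_onI)
    fix a b assume a: "a \<in> ?S" and b: "b \<in> ?S" and e: "?g a = ?g b"
    show "a = b"
    proof
      fix i
      have aN: "a i \<subseteq> {..<N}" and bN: "b i \<subseteq> {..<N}" using a b unfolding Addr_def by auto
      have "a i = (a i \<inter> {..<k}) \<union> (a i \<inter> {k..<N})" using aN by auto
      moreover have "b i = (b i \<inter> {..<k}) \<union> (b i \<inter> {k..<N})" using bN by auto
      moreover have "a i \<inter> {k..<N} = b i \<inter> {k..<N}" using e by (metis)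
      moreover have "a i \<inter> {..<k} = b i \<inter> {..<k}" using a b by auto
      ultimately show "a i = b i" by metis
    qed
  qed
  have sub: "?g ` ?S \<subseteq> PiE UNIV (\<lambda>_. Pow {k..<N})" by auto
  have "card ?S = card (?g ` ?S)" using card_image[OF inj] by simp
  also have "\<dots> \<le> card (PiE (UNIV::'n set) (\<lambda>_. Pow {k..<N}))"
    by (intro card_mono sub finite_PiE) auto
  also have "\<dots> = 2 ^ ((N - k) * CARD('n))"
    by (subst card_PiE) (auto simp: card_Pow power_mult)
  finally show ?thesis .
qed

lemma finite_ext: "finite {\<alpha> \<in> Addr N. P \<alpha>}"
  by (rule finite_subset[OF _ finite_Addr]) auto

lemma card_ext_ge:
  fixes \<gamma> :: "'n::finite \<Rightarrow> nat set"
  assumes "k \<le> N" "\<gamma> \<in> Addr k"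
  shows "2 ^ ((N - k) * CARD('n)) \<le> card {\<alpha> \<in> Addr N. \<forall>i. \<alpha> i \<inter> {..<k} = \<gamma> i}"
proof -
  let ?S = "{\<alpha> \<in> Addr N. \<forall>i. \<alpha> i \<inter> {..<k} = (\<gamma> i :: nat set)} :: ('n \<Rightarrow> nat set) set"
  let ?P = "PiE (UNIV::'n set) (\<lambda>_. Pow {k..<N})"
  let ?h = "\<lambda>\<delta>::'n \<Rightarrow> nat set. \<lambda>i. \<gamma> i \<union> \<delta> i"
  have g: "\<gamma> i \<subseteq> {..<k}" for i using assms(2) unfolding Addr_def by auto
  have inj: "inj_on ?h ?P"
  proof (rule inj_onI)
    fix a b assume a: "a \<in> ?P" and b: "b \<in> ?P" and e: "?h a = ?h b"
    show "a = b"
    proof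
      fix i
      have "a i = (\<gamma> i \<union> a i) \<inter> {k..<N}" "b i = (\<gamma> i \<union> b i) \<inter> {k..<N}"
        using a b g[of i] by auto
      then show "a i = b i" using e by metis
    qed
  qed
  have sub: "?h ` ?P \<subseteq> ?S"
  proof
    fix z assume "z \<in> ?h ` ?P"
    then obtain \<delta> where d: "\<delta> \<in> ?P" "z = ?h \<delta>" by auto
    have di: "\<delta> i \<subseteq> {k..<N}" for i using d(1) by auto
    have "z i \<subseteq> {..<N}" for i using di[of i] g[of i] assms(1) d(2) by auto
    moreover have "z i \<inter> {..<k} = \<gamma> i" for i using di[of i] g[of i] d(2) by auto
    ultimately show "z \<in> ?S" unfolding Addr_def by auto
  qed
  have "2 ^ ((N - k) * CARD('n)) = card ?P"
    by (subst card_PiE) (auto simp: card_Pow power_mult)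
  also have "\<dots> = card (?h ` ?P)" using card_image[OF inj] by simp
  also have "\<dots> \<le> card ?S" by (intro card_mono sub finite_ext)
  finally show ?thesis .
qed

lemma cube_diam_bound:
  fixes x y :: "real^'n::finite"
  assumes "x \<in> cube n \<beta>" "y \<in> cube n \<beta>"
  shows "norm (x - y) \<le> CARD('n) / 3 ^ n"
proof -
  have "norm (x - y) \<le> (\<Sum>i\<in>UNIV. \<bar>(x - y) $ i\<bar>)" by (rule norm_le_l1_cart)
  also have "\<dots> \<le> (\<Sum>i\<in>(UNIV::'n set). 1 / 3 ^ n)"
  proof (intro sum_mono)
    fix i assume "i \<in> (UNIV :: 'n set)"
    have "cval (\<beta> i) \<le> x $ i \<and> x $ i \<le> cval (\<beta> i) + 1 / 3 ^ n"
         "cval (\<beta> i) \<le> y $ i \<and> y $ i \<le> cval (\<beta> i) + 1 / 3 ^ n"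
      using assms unfolding cube_def by auto
    then show "\<bar>(x - y) $ i\<bar> \<le> 1 / 3 ^ n" by (simp add: abs_le_iff)
  qed
  finally show ?thesis by simp
qed

lemma diameter_cube: "diameter (cube n \<beta> :: (real^'n::finite) set) \<le> CARD('n) / 3 ^ n"
  by (rule diameter_le) (auto intro: cube_diam_bound)

lemma bounded_cube: "bounded (cube n \<beta> :: (real^'n::finite) set)"
proof -
  have "cube n \<beta> \<subseteq> cbox (\<chi> i. cval (\<beta> i)) (\<chi> i. cval (\<beta> i) + 1 / 3 ^ n)"
    unfolding cube_def by (auto simp: mem_box_cart)
  then show ?thesis using bounded_cbox bounded_subset by blast
qed

lemma closed_cube: "closed (cube n \<beta> :: (real^'n::finite) set)"
  unfolding cube_def
  by (intro closed_Collect_all closed_Collect_conj closed_Collect_le continuous_intros)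



lemma exists_m_small:
  assumes "0 < \<delta>" "0 \<le> c"
  shows "\<exists>m\<ge>n. c / 3 ^ m \<le> (\<delta>::real)"
proof -
  obtain k where k: "c < 3 ^ k * \<delta>"
    using real_arch_pow[of 3 "c / \<delta>"] assms by (auto simp: field_simps)
  define m where "m = max n k"
  have "(3::real) ^ k \<le> 3 ^ m" unfolding m_def by (intro power_increasing) auto
  then have "3 ^ k * \<delta> \<le> 3 ^ m * \<delta>" using assms(1) by (intro mult_right_mono) auto
  then have "c \<le> 3 ^ m * \<delta>" using k by linarith
  then show ?thesis unfolding m_def by (intro exI[of _ "max n k"]) (auto simp: m_def field_simps)
qed

lemma pow3_s:
  assumes "s = real CARD('n::finite) * ln 2 / ln 3"
  shows "(3::real) powr s = 2 ^ CARD('n)"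
proof -
  have "(3::real) powr s = exp (s * ln 3)" by (simp add: powr_def)
  also have "s * ln 3 = real CARD('n) * ln 2" using assms by simp
  also have "exp (real CARD('n) * ln 2) = (2::real) powr real CARD('n)" by (simp add: powr_def)
  also have "\<dots> = 2 ^ CARD('n)" by (simp add: powr_realpow)
  finally show ?thesis .
qed

lemma pow3m_s:
  assumes "s = real CARD('n::finite) * ln 2 / ln 3"
  shows "((3::real) ^ m) powr s = 2 ^ (m * CARD('n))"
proof -
  have "((3::real) ^ m) powr s = ((3::real) powr real m) powr s" by (simp add: powr_realpow)
  also have "\<dots> = ((3::real) powr s) powr real m" by (simp add: powr_powr mult.commute)
  also have "\<dots> = (2 ^ CARD('n)) ^ m" using pow3_s[OF assms] by (simp add: powr_realpow)
  also have "\<dots> = 2 ^ (m * CARD('n))" by (subst mult.commute) (rule power_mult[symmetric])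
  finally show ?thesis .
qed

lemma s_pos: "s = real CARD('n::finite) * ln 2 / ln 3 \<Longrightarrow> 0 < s"
  by simp

lemma pre_UB:
  fixes A :: "(real^'n::finite) set"
  assumes "real CARD('n) / 3 ^ m \<le> \<delta>" "0 \<le> t"
  shows "hausdorff_pre t \<delta> (A \<inter> cantor_dust)
     \<le> ennreal (real (card (addr m ` (A \<inter> cantor_dust))) * (real CARD('n) / 3 ^ m) powr t)"
proof -
  let ?T = "addr m ` (A \<inter> cantor_dust)"
  let ?c = "(real CARD('n) / 3 ^ m) powr t"
  have fT: "finite ?T" by (rule finite_subset[OF _ finite_Addr[of m]]) (auto simp: addr_in_Addr)
  obtain xs where xs: "set xs = ?T" "distinct xs" using finite_distinct_list[OF fT] by blast
  define U where "U i = (if i < length xs then cube m (xs ! i) else {})" for i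
  have "0 \<le> real CARD('n) / 3 ^ m" by simp
  then have dpos: "0 \<le> \<delta>" using assms(1) by linarith
  have cov: "A \<inter> cantor_dust \<subseteq> (\<Union>i. U i)"
  proof
    fix x assume x: "x \<in> A \<inter> cantor_dust"
    then have "addr m x \<in> set xs" using xs by auto
    then obtain i where "i < length xs" "xs ! i = addr m x" by (auto simp: in_set_conv_nth)
    then have "x \<in> U i" using in_cube_addr[of x m] x unfolding U_def by auto
    then show "x \<in> (\<Union>i. U i)" by auto
  qed
  have props: "\<forall>i. bounded (U i) \<and> diameter (U i) \<le> \<delta>"
    using diameter_cube bounded_cube assms(1) dpos unfolding U_def by (auto intro: order_trans)
  have "hausdorff_pre t \<delta> (A \<inter> cantor_dust) \<le> (\<Sum>i. ennreal (diameter (U i) powr t))"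
    unfolding hausdorff_pre_def by (rule INF_lower) (use cov props in auto)
  also have "(\<Sum>i. ennreal (diameter (U i) powr t)) = (\<Sum>i<length xs. ennreal (diameter (U i) powr t))"
    by (rule suminf_finite) (auto simp: U_def)
  also have "\<dots> \<le> (\<Sum>i<length xs. ennreal ?c)"
  proof (rule sum_mono)
    fix i assume "i \<in> {..<length xs}"
    then have "diameter (U i) \<le> real CARD('n) / 3 ^ m" using diameter_cube unfolding U_def by auto
    moreover have "0 \<le> diameter (U i)" using diameter_ge_0 props by blast
    ultimately show "ennreal (diameter (U i) powr t) \<le> ennreal ?c"
      by (intro ennreal_leI powr_mono2) (use assms in auto)
  qed
  also have "\<dots> = ennreal (real (card ?T) * ?c)"
    using distinct_card[OF xs(2)] xs(1) by (simp add: ennreal_mult' ennreal_of_nat_eq_real_of_nat)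
  finally show ?thesis .
qed

lemma card_addr_trunc:
  fixes S :: "(real^'n::finite) set"
  assumes "n \<le> m"
  shows "card (addr m ` S) \<le> card (addr n ` S) * 2 ^ ((m - n) * CARD('n))"
proof -
  let ?f = "\<lambda>\<beta>::'n \<Rightarrow> nat set. \<lambda>i. \<beta> i \<inter> {..<n}"
  have fin: "finite (addr m ` S)" by (rule finite_subset[OF _ finite_Addr[of m]]) (auto simp: addr_in_Addr)
  have mn: "{..<m} \<inter> {..<n} = {..<n::nat}" using assms by auto
  have img: "?f ` (addr m ` S) = addr n ` S"
    unfolding addr_def image_image by (simp add: Int_assoc mn)
  have "card (addr m ` S) \<le> card (?f ` (addr m ` S)) * 2 ^ ((m - n) * CARD('n))"
  proof (rule card_fibers_le[OF fin])
    fix \<gamma> assume "\<gamma> \<in> ?f ` (addr m ` S)"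
    have sub: "{x \<in> addr m ` S. ?f x = \<gamma>} \<subseteq> {\<alpha> \<in> Addr m. \<forall>i. \<alpha> i \<inter> {..<n} = \<gamma> i}"
      by (auto simp: addr_in_Addr)
    show "card {x \<in> addr m ` S. ?f x = \<gamma>} \<le> 2 ^ ((m - n) * CARD('n))"
      using order_trans[OF card_mono[OF finite_ext sub] card_ext_le[OF assms, of \<gamma>]] .
  qed
  then show ?thesis using img by simp
qed

lemma H_UB:
  fixes A :: "(real^'n::finite) set"
  assumes s: "s = real CARD('n) * ln 2 / ln 3"
  shows "hausdorff_measure s (A \<inter> cantor_dust)
     \<le> ennreal (real (card (addr n ` (A \<inter> cantor_dust))) * real CARD('n) powr s / 2 ^ (n * CARD('n)))"
  unfolding hausdorff_measure_def
proof (rule SUP_least)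
  fix \<delta> :: real assume "\<delta> \<in> {0<..}"
  then obtain m where m: "m \<ge> n" "real CARD('n) / 3 ^ m \<le> \<delta>"
    using exists_m_small[of \<delta> "real CARD('n)" n] by auto
  let ?S = "A \<inter> cantor_dust"
  have "hausdorff_pre s \<delta> ?S \<le> ennreal (real (card (addr m ` ?S)) * (real CARD('n) / 3 ^ m) powr s)"
    using pre_UB[OF m(2), of s A] s_pos[OF s] by simp
  also have "\<dots> \<le> ennreal (real (card (addr n ` ?S)) * real CARD('n) powr s / 2 ^ (n * CARD('n)))"
  proof (rule ennreal_leI)
    have c: "real (card (addr m ` ?S)) \<le> real (card (addr n ` ?S)) * 2 ^ ((m - n) * CARD('n))"
    proof -
      have "real (card (addr m ` ?S)) \<le> real (card (addr n ` ?S) * 2 ^ ((m - n) * CARD('n)))"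
        using card_addr_trunc[OF m(1), of ?S] by (simp only: of_nat_le_iff)
      then show ?thesis by simp
    qed
    have p: "(real CARD('n) / 3 ^ m) powr s = real CARD('n) powr s / 2 ^ (m * CARD('n))"
      by (simp add: powr_divide pow3m_s[OF s])
    have e: "(2::real) ^ (m * CARD('n)) = 2 ^ ((m - n) * CARD('n)) * 2 ^ (n * CARD('n))"
      using m(1) by (simp add: power_add[symmetric] add_mult_distrib[symmetric])
    have "real (card (addr m ` ?S)) * (real CARD('n) / 3 ^ m) powr s
        \<le> real (card (addr n ` ?S)) * 2 ^ ((m - n) * CARD('n)) * (real CARD('n) powr s / 2 ^ (m * CARD('n)))"
      unfolding p by (intro mult_right_mono c) auto
    also have "\<dots> = real (card (addr n ` ?S)) * real CARD('n) powr s / 2 ^ (n * CARD('n))"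
      unfolding e by (simp add: field_simps)
    finally show "real (card (addr m ` ?S)) * (real CARD('n) / 3 ^ m) powr s
        \<le> real (card (addr n ` ?S)) * real CARD('n) powr s / 2 ^ (n * CARD('n))" .
  qed
  finally show "hausdorff_pre s \<delta> ?S \<le> ennreal (real (card (addr n ` ?S)) * real CARD('n) powr s / 2 ^ (n * CARD('n)))" .
qed

lemma H_fin:
  assumes s: "s = real CARD('n::finite) * ln 2 / ln 3"
  shows "hausdorff_measure s (cantor_dust :: (real^'n) set) \<le> ennreal (real CARD('n) powr s)"
proof -
  have "addr 0 ` (UNIV \<inter> (cantor_dust :: (real^'n) set)) \<subseteq> {\<lambda>i. {}}"
    unfolding addr_def by auto
  then have "card (addr 0 ` (UNIV \<inter> (cantor_dust :: (real^'n) set))) \<le> card {\<lambda>i::'n. {}::nat set}"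
    by (intro card_mono) auto
  then have c1: "real (card (addr 0 ` (UNIV \<inter> (cantor_dust :: (real^'n) set)))) \<le> 1" by simp
  have "real (card (addr 0 ` (UNIV \<inter> (cantor_dust :: (real^'n) set)))) * real CARD('n) powr s / 2 ^ (0 * CARD('n))
      \<le> real CARD('n) powr s"
    using mult_right_mono[OF c1, of "real CARD('n) powr s"] by simp
  then have "ennreal (real (card (addr 0 ` (UNIV \<inter> (cantor_dust :: (real^'n) set)))) * real CARD('n) powr s / 2 ^ (0 * CARD('n)))
      \<le> ennreal (real CARD('n) powr s)" by (rule ennreal_leI)
  moreover have "hausdorff_measure s (UNIV \<inter> (cantor_dust :: (real^'n) set))
     \<le> ennreal (real (card (addr 0 ` (UNIV \<inter> (cantor_dust :: (real^'n) set)))) * real CARD('n) powr s / 2 ^ (0 * CARD('n)))"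
    by (rule H_UB[OF s])
  ultimately have "hausdorff_measure s (UNIV \<inter> (cantor_dust :: (real^'n) set)) \<le> ennreal (real CARD('n) powr s)"
    by (rule order_trans[rotated])
  then show ?thesis by simp
qed

lemma H_zero:
  assumes s: "s = real CARD('n::finite) * ln 2 / ln 3" and t: "s < t"
  shows "hausdorff_measure t (cantor_dust :: (real^'n) set) = 0"
proof -
  let ?K = "cantor_dust :: (real^'n) set"
  have "hausdorff_pre t \<delta> ?K = 0" if dpos: "0 < \<delta>" for \<delta>
  proof -
    define q where "q = (2::real) ^ CARD('n) / 3 powr t"
    have "(3::real) powr s < 3 powr t" using t by (intro powr_less_mono) auto
    then have q1: "q < 1" "0 \<le> q" unfolding q_def using pow3_s[OF s] by auto
    obtain m0 where m0: "real CARD('n) / 3 ^ m0 \<le> \<delta>" using exists_m_small[of \<delta> "real CARD('n)" 0] dpos by auto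
    have ev: "hausdorff_pre t \<delta> ?K \<le> ennreal (real CARD('n) powr t * q ^ m)" if "m \<ge> m0" for m
    proof -
      have md: "real CARD('n) / 3 ^ m \<le> \<delta>"
      proof -
        have "(3::real) ^ m0 \<le> 3 ^ m" using that by (intro power_increasing) auto
        then have "real CARD('n) / 3 ^ m \<le> real CARD('n) / 3 ^ m0"
          by (intro divide_left_mono) auto
        then show ?thesis using m0 by linarith
      qed
      have "hausdorff_pre t \<delta> (UNIV \<inter> ?K) \<le> ennreal (real (card (addr m ` (UNIV \<inter> ?K))) * (real CARD('n) / 3 ^ m) powr t)"
        using pre_UB[OF md, of t UNIV] t s_pos[OF s] by simp
      also have "\<dots> \<le> ennreal (real CARD('n) powr t * q ^ m)"
      proof (rule ennreal_leI)
        have "card (addr m ` (UNIV \<inter> ?K)) \<le> card (Addr m :: ('n \<Rightarrow> nat set) set)"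
          by (intro card_mono finite_Addr) (auto simp: addr_in_Addr)
        then have c: "real (card (addr m ` (UNIV \<inter> ?K))) \<le> 2 ^ (m * CARD('n))"
        proof -
          have "real (card (addr m ` (UNIV \<inter> ?K))) \<le> real ((2::nat) ^ (m * CARD('n)))"
            using \<open>card (addr m ` (UNIV \<inter> ?K)) \<le> card (Addr m :: ('n \<Rightarrow> nat set) set)\<close>
            unfolding card_Addr by (simp only: of_nat_le_iff)
          then show ?thesis by simp
        qed
        have p1: "(real CARD('n) / 3 ^ m) powr t = real CARD('n) powr t / (3 powr t) ^ m"
          by (simp add: powr_divide powr_realpow[symmetric] powr_powr mult.commute powr_power)
        have "(2::real) ^ (m * CARD('n)) / (3 powr t) ^ m = q ^ m"
        proof -
          have "(2::real) ^ (m * CARD('n)) = (2 ^ CARD('n)) ^ m" by (subst mult.commute) (rule power_mult)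
          then show ?thesis unfolding q_def by (simp add: power_divide)
        qed
        have "real (card (addr m ` (UNIV \<inter> ?K))) * (real CARD('n) / 3 ^ m) powr t
            \<le> 2 ^ (m * CARD('n)) * (real CARD('n) / 3 ^ m) powr t"
          using c by (intro mult_right_mono) auto
        also have "\<dots> = 2 ^ (m * CARD('n)) * (real CARD('n) powr t / (3 powr t) ^ m)"
          unfolding p1 ..
        also have "\<dots> = real CARD('n) powr t * q ^ m"
          using \<open>(2::real) ^ (m * CARD('n)) / (3 powr t) ^ m = q ^ m\<close> by (simp add: field_simps)
        finally show "real (card (addr m ` (UNIV \<inter> ?K))) * (real CARD('n) / 3 ^ m) powr t \<le> real CARD('n) powr t * q ^ m" .
      qed
      finally show ?thesis by simp
    qed
    have lim: "(\<lambda>m. ennreal (real CARD('n) powr t * q ^ m)) \<longlonglongrightarrow> ennreal (real CARD('n) powr t * 0)"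
      by (intro tendsto_ennrealI tendsto_mult tendsto_const LIMSEQ_power_zero) (use q1 in auto)
    have "hausdorff_pre t \<delta> ?K \<le> 0"
      using LIMSEQ_le_const[OF lim, of "hausdorff_pre t \<delta> ?K"] ev by auto
    then show ?thesis by simp
  qed
  then show ?thesis unfolding hausdorff_measure_def by simp
qed



definition pt :: "('n::finite \<Rightarrow> nat set) \<Rightarrow> real^'n" where
  "pt \<alpha> = (\<chi> i. cval (\<alpha> i))"

definition Ext :: "nat \<Rightarrow> nat \<Rightarrow> ('n::finite \<Rightarrow> nat set) \<Rightarrow> ('n \<Rightarrow> nat set) set" where
  "Ext N n \<beta> = {\<alpha> \<in> Addr N. \<forall>i. \<alpha> i \<inter> {..<n} = \<beta> i}"

lemma pt_in_K: "pt \<alpha> \<in> cantor_dust"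
  unfolding pt_def cantor_dust_def cantor_set_eq by auto

lemma pt_in_cube: "\<forall>i. \<alpha> i \<inter> {..<n} = \<beta> i \<Longrightarrow> pt \<alpha> \<in> cube n \<beta>"
  unfolding pt_def cube_def using cval_trunc_bounds[of "\<alpha> _" n] by auto

lemma count_one:
  fixes W :: "(real^'n::finite) set"
  assumes s: "s = real CARD('n) * ln 2 / ln 3"
    and bd: "bounded W" "diameter W < 1" "1 / 3 ^ N \<le> diameter W"
  shows "real (card {\<alpha> \<in> Ext N n \<beta>. pt \<alpha> \<in> W}) / 2 ^ (N * CARD('n))
           \<le> 2 ^ CARD('n) * diameter W powr s"
proof -
  let ?D = "diameter W"
  let ?A = "{\<alpha> \<in> Ext N n \<beta>. pt \<alpha> \<in> W}"
  define KS where "KS = {k. k \<le> N \<and> ?D < 1 / 3 ^ k}"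
  have fKS: "finite KS" unfolding KS_def by auto
  have "0 \<in> KS" unfolding KS_def using bd by auto
  define k where "k = Max KS"
  have kKS: "k \<in> KS" unfolding k_def using Max_in[OF fKS] \<open>0 \<in> KS\<close> by auto
  then have kN: "k \<le> N" and Dk: "?D < 1 / 3 ^ k" unfolding KS_def by auto
  have Dk1: "1 / 3 ^ Suc k \<le> ?D"
  proof (cases "k = N")
    case True
    have "1 / (3::real) ^ Suc k \<le> 1 / 3 ^ k" by (intro divide_left_mono power_increasing) auto
    then show ?thesis using bd(3) unfolding True by linarith
  next
    case False
    then have "Suc k \<le> N" using kN by auto
    moreover have "Suc k \<notin> KS" using Max_ge[OF fKS, of "Suc k"] k_def by auto
    ultimately show ?thesis unfolding KS_def by auto
  qed
  have sp: "0 < s" using s by simp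
  have cardA: "card ?A \<le> 2 ^ ((N - k) * CARD('n))"
  proof (cases "?A = {}")
    case True
    then have "card ?A = 0" by (simp only: card.empty)
    then show ?thesis by simp
  next
    case False
    then obtain a0 where a0: "a0 \<in> ?A" by auto
    have "?A \<subseteq> {\<alpha> \<in> Addr N. \<forall>i. \<alpha> i \<inter> {..<k} = a0 i \<inter> {..<k}}"
    proof
      fix a assume a: "a \<in> ?A"
      have "\<alpha> i \<inter> {..<k} = a0 i \<inter> {..<k}" if "\<alpha> = a" for \<alpha> i
      proof (rule ccontr)
        assume ne: "\<alpha> i \<inter> {..<k} \<noteq> a0 i \<inter> {..<k}"
        have "\<bar>cval (a i) - cval (a0 i)\<bar> = \<bar>(pt a - pt a0) $ i\<bar>" by (simp add: pt_def)
        also have "\<dots> \<le> norm (pt a - pt a0)" by (rule component_le_norm_cart)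
        also have "\<dots> \<le> ?D" using diameter_bounded_bound[OF bd(1), of "pt a" "pt a0"] a a0 by (simp add: dist_norm)
        finally show False using cval_sep[OF ne] that Dk by auto
      qed
      then show "a \<in> {\<alpha> \<in> Addr N. \<forall>i. \<alpha> i \<inter> {..<k} = a0 i \<inter> {..<k}}"
        using a unfolding Ext_def by auto
    qed
    from order_trans[OF card_mono[OF finite_ext this] card_ext_le[OF kN, of "\<lambda>i. a0 i \<inter> {..<k}"]]
    show ?thesis .
  qed
  have "real (card ?A) / 2 ^ (N * CARD('n)) \<le> 2 ^ ((N - k) * CARD('n)) / 2 ^ (N * CARD('n))"
    using cardA by (intro divide_right_mono) (auto simp: of_nat_le_iff[symmetric])
  also have "\<dots> = 1 / 2 ^ (k * CARD('n))"
  proof -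
    have "(2::real) ^ (N * CARD('n)) = 2 ^ ((N - k) * CARD('n)) * 2 ^ (k * CARD('n))"
      using kN by (simp add: power_add[symmetric] add_mult_distrib[symmetric])
    then show ?thesis by simp
  qed
  also have "\<dots> = 2 ^ CARD('n) * (1 / 3 ^ Suc k) powr s"
  proof -
    have "(1 / (3::real) ^ Suc k) powr s = 1 / 2 ^ (Suc k * CARD('n))"
      by (simp add: powr_divide pow3m_s[OF s] del: power_Suc)
    then show ?thesis by (simp add: power_add)
  qed
  also have "\<dots> \<le> 2 ^ CARD('n) * ?D powr s"
    using Dk1 sp by (intro mult_left_mono powr_mono2) auto
  finally show ?thesis .
qed

lemma count_cover:
  fixes W :: "nat \<Rightarrow> (real^'n::finite) set"
  assumes s: "s = real CARD('n) * ln 2 / ln 3"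
    and F: "finite F" and \<beta>: "\<beta> \<in> Addr n" and nN: "n \<le> N"
    and cov: "\<And>\<alpha>. \<alpha> \<in> Ext N n \<beta> \<Longrightarrow> \<exists>j\<in>F. pt \<alpha> \<in> W j"
    and bd: "\<And>j. j \<in> F \<Longrightarrow> bounded (W j) \<and> diameter (W j) < 1 \<and> 1 / 3 ^ N \<le> diameter (W j)"
  shows "1 / 2 ^ (n * CARD('n)) \<le> 2 ^ CARD('n) * (\<Sum>j\<in>F. diameter (W j) powr s)"
proof -
  let ?A = "\<lambda>j. {\<alpha> \<in> Ext N n \<beta>. pt \<alpha> \<in> W j}"
  have "Ext N n \<beta> \<subseteq> (\<Union>j\<in>F. ?A j)" using cov by auto
  then have "card (Ext N n \<beta>) \<le> card (\<Union>j\<in>F. ?A j)"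
    by (intro card_mono) (auto intro!: finite_UN_I F simp: Ext_def finite_ext)
  also have "\<dots> \<le> (\<Sum>j\<in>F. card (?A j))" by (intro card_UN_le F)
  finally have "real (card (Ext N n \<beta>)) \<le> real (\<Sum>j\<in>F. card (?A j))"
    by (simp only: of_nat_le_iff)
  then have c1: "real (card (Ext N n \<beta>)) \<le> (\<Sum>j\<in>F. real (card (?A j)))"
    by simp
  have c0: "2 ^ ((N - n) * CARD('n)) \<le> card (Ext N n \<beta>)"
    unfolding Ext_def using card_ext_ge[OF nN \<beta>] by simp
  have "1 / 2 ^ (n * CARD('n)) = (2::real) ^ ((N - n) * CARD('n)) / 2 ^ (N * CARD('n))"
  proof -
    have "(2::real) ^ (N * CARD('n)) = 2 ^ ((N - n) * CARD('n)) * 2 ^ (n * CARD('n))"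
      using nN by (simp add: power_add[symmetric] add_mult_distrib[symmetric])
    then show ?thesis by simp
  qed
  also have "\<dots> \<le> real (card (Ext N n \<beta>)) / 2 ^ (N * CARD('n))"
    using c0 by (intro divide_right_mono) (auto simp: of_nat_le_iff[symmetric])
  also have "\<dots> \<le> (\<Sum>j\<in>F. real (card (?A j)) / 2 ^ (N * CARD('n)))"
    using c1 by (simp add: sum_divide_distrib[symmetric] divide_right_mono)
  also have "\<dots> \<le> (\<Sum>j\<in>F. 2 ^ CARD('n) * diameter (W j) powr s)"
    by (intro sum_mono count_one[OF s]) (use bd in auto)
  finally show ?thesis by (simp add: sum_distrib_left)
qed



lemma pre_mono: "A \<subseteq> B \<Longrightarrow> hausdorff_pre t \<delta> A \<le> hausdorff_pre t \<delta> B"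
  unfolding hausdorff_pre_def by (rule INF_superset_mono) auto

lemma H_mono: "A \<subseteq> B \<Longrightarrow> hausdorff_measure t A \<le> hausdorff_measure t B"
  unfolding hausdorff_measure_def by (intro SUP_mono' pre_mono)

lemma geo_half_le: "finite F \<Longrightarrow> (\<Sum>j\<in>F. 1 / (2::real) ^ Suc j) \<le> 1"
proof -
  assume F: "finite F"
  have e: "(\<lambda>j. 1 / (2::real) ^ Suc j) = (\<lambda>j. (1/2) * (1/2) ^ j)"
    by (auto simp: fun_eq_iff power_one_over)
  have sm: "summable (\<lambda>j. 1 / (2::real) ^ Suc j)" unfolding e
    by (intro summable_mult summable_geometric) auto
  have "(\<Sum>j. 1 / (2::real) ^ Suc j) = (1/2) * (\<Sum>j. (1/2::real) ^ j)"
    unfolding e by (intro suminf_mult summable_geometric) auto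
  also have "\<dots> = 1" by (subst suminf_geometric) auto
  finally have s1: "(\<Sum>j. 1 / (2::real) ^ Suc j) = 1" .
  have "(\<Sum>j\<in>F. 1 / (2::real) ^ Suc j) \<le> (\<Sum>j. 1 / (2::real) ^ Suc j)"
    by (rule sum_le_suminf[OF sm F]) auto
  then show ?thesis using s1 by simp
qed

lemma LB_real:
  fixes \<beta> :: "'n::finite \<Rightarrow> nat set" and U :: "nat \<Rightarrow> (real^'n) set"
  assumes s: "s = real CARD('n) * ln 2 / ln 3"
    and \<beta>: "\<beta> \<in> Addr n" and \<delta>: "\<delta> \<le> 1/8"
    and cov: "cantor_dust \<inter> cube n \<beta> \<subseteq> (\<Union>j. U j)"
    and props: "\<And>j. bounded (U j) \<and> diameter (U j) \<le> \<delta>"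
    and sm: "summable (\<lambda>j. diameter (U j) powr s)"
    and \<eta>: "0 < \<eta>" "\<eta> \<le> (1/4) powr s"
  shows "1 / (2 ^ (n * CARD('n)) * 2 ^ CARD('n)) \<le> 4 powr s * (\<Sum>j. diameter (U j) powr s) + 2 powr s * \<eta>"
proof -
  let ?d = "CARD('n)"
  define D where "D j = diameter (U j)" for j
  have D0: "0 \<le> D j" for j unfolding D_def using props diameter_ge_0 by blast
  have sp: "0 < s" using s by simp
  define r where "r j = (\<eta> / 2 ^ Suc j) powr (1/s)" for j
  have rpos: "0 < r j" for j unfolding r_def using \<eta> by simp
  have rle: "r j \<le> 1/4" for j
  proof -
    have "(1::real) \<le> 2 ^ Suc j" by (rule one_le_power) simp
    then have "\<eta> / 2 ^ Suc j \<le> \<eta> / 1" using \<eta> by (intro divide_left_mono) auto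
    then have "\<eta> / 2 ^ Suc j \<le> \<eta>" by simp
    then have "\<eta> / 2 ^ Suc j \<le> (1/4) powr s" using \<eta> by linarith
    then have "r j \<le> ((1/4) powr s) powr (1/s)" unfolding r_def using \<eta> sp
      by (intro powr_mono2) auto
    also have "\<dots> = 1/4" using sp by (simp add: powr_powr)
    finally show ?thesis .
  qed
  have rs: "r j powr s = \<eta> / 2 ^ Suc j" for j
    unfolding r_def using sp \<eta> by (simp add: powr_powr)
  define \<rho> where "\<rho> j = (if 0 < D j then 2 * D j else r j)" for j
  have \<rho>pos: "0 < \<rho> j" for j unfolding \<rho>_def using rpos by auto
  have \<rho>le: "\<rho> j \<le> 1/4" for j
  proof -
    have "D j \<le> 1/8" using props[of j] \<delta> unfolding D_def by linarith
    then show ?thesis unfolding \<rho>_def using rle[of j] by auto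
  qed
  define u where "u j = (SOME x. x \<in> U j)" for j
  define V where "V j = (if U j = {} then {} else ball (u j) (\<rho> j))" for j
  have UV: "U j \<subseteq> V j" for j
  proof (cases "U j = {}")
    case True then show ?thesis by simp
  next
    case False
    then have uj: "u j \<in> U j" unfolding u_def by (simp add: some_in_eq)
    show ?thesis
    proof
      fix y assume y: "y \<in> U j"
      have "dist (u j) y \<le> D j" unfolding D_def using diameter_bounded_bound[OF _ uj y] props by blast
      moreover have "D j < \<rho> j" unfolding \<rho>_def using D0[of j] rpos[of j] by auto
      ultimately show "y \<in> V j" unfolding V_def using False by auto
    qed
  qed
  have openV: "open (V j)" for j unfolding V_def by auto
  have cS: "compact (cantor_dust \<inter> cube n \<beta>)"
    by (intro compact_Int_closed cantor_dust_compact closed_cube)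
  have cUV: "cantor_dust \<inter> cube n \<beta> \<subseteq> (\<Union>c\<in>UNIV. V c)" using cov UV by blast
  obtain F where F0: "F \<subseteq> UNIV" and F1: "finite F" and F2: "cantor_dust \<inter> cube n \<beta> \<subseteq> (\<Union>c\<in>F. V c)"
    by (rule compactE_image[OF cS openV cUV])
  note F = F1 F2
  define F' where "F' = {j\<in>F. U j \<noteq> {}}"
  have F'fin: "finite F'" unfolding F'_def using F(1) by auto
  have cov': "cantor_dust \<inter> cube n \<beta> \<subseteq> \<Union>(V ` F')"
  proof
    fix x assume x: "x \<in> cantor_dust \<inter> cube n \<beta>"
    then obtain j where j: "j \<in> F" "x \<in> V j" using F(2) by blast
    then have "U j \<noteq> {}" unfolding V_def by (cases "U j = {}") auto
    then show "x \<in> \<Union>(V ` F')" using j unfolding F'_def by blast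
  qed
  have diamV: "diameter (V j) = 2 * \<rho> j" if "j \<in> F'" for j
    using that \<rho>pos[of j] unfolding F'_def V_def by auto
  define Nf where "Nf j = (SOME m. 1 / 3 ^ m \<le> 2 * \<rho> j)" for j
  have Nf: "1 / 3 ^ Nf j \<le> 2 * \<rho> j" for j
  proof -
    have "\<exists>m. 1 / 3 ^ m \<le> 2 * \<rho> j" using exists_m_small[of "2 * \<rho> j" 1 0] \<rho>pos[of j] by auto
    then show ?thesis unfolding Nf_def by (rule someI_ex)
  qed
  define N where "N = Max (insert n (Nf ` F'))"
  have nN: "n \<le> N" unfolding N_def using F'fin by auto
  have NfN: "Nf j \<le> N" if "j \<in> F'" for j unfolding N_def using F'fin that by auto
  have bdV: "bounded (V j) \<and> diameter (V j) < 1 \<and> 1 / 3 ^ N \<le> diameter (V j)" if j: "j \<in> F'" for j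
  proof -
    have "(1::real) / 3 ^ N \<le> 1 / 3 ^ Nf j" using NfN[OF j] by (intro divide_left_mono power_increasing) auto
    then show ?thesis using diamV[OF j] Nf[of j] \<rho>le[of j] unfolding V_def by auto
  qed
  have covE: "\<exists>j\<in>F'. pt \<alpha> \<in> V j" if "\<alpha> \<in> Ext N n \<beta>" for \<alpha>
  proof -
    have "pt \<alpha> \<in> cantor_dust \<inter> cube n \<beta>"
      using that pt_in_K[of \<alpha>] pt_in_cube[of \<alpha> n \<beta>] unfolding Ext_def by auto
    then show ?thesis using cov' by auto
  qed
  have main: "1 / 2 ^ (n * ?d) \<le> 2 ^ ?d * (\<Sum>j\<in>F'. diameter (V j) powr s)"
    by (rule count_cover[OF s F'fin \<beta> nN covE bdV])
  have trm: "diameter (V j) powr s \<le> 4 powr s * D j powr s + 2 powr s * (\<eta> / 2 ^ Suc j)" if j: "j \<in> F'" for j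
  proof (cases "0 < D j")
    case True
    have "diameter (V j) powr s = (4 * D j) powr s" using diamV[OF j] True unfolding \<rho>_def by simp
    also have "\<dots> = 4 powr s * D j powr s" using D0[of j] by (simp add: powr_mult)
    finally show ?thesis using \<eta> by simp
  next
    case False
    then have "D j = 0" using D0[of j] by linarith
    have "diameter (V j) powr s = (2 * r j) powr s" using diamV[OF j] False unfolding \<rho>_def by simp
    also have "\<dots> = 2 powr s * (\<eta> / 2 ^ Suc j)" using rpos[of j] by (simp add: powr_mult rs)
    finally show ?thesis using \<open>D j = 0\<close> by simp
  qed
  have "(\<Sum>j\<in>F'. diameter (V j) powr s) \<le> (\<Sum>j\<in>F'. 4 powr s * D j powr s + 2 powr s * (\<eta> / 2 ^ Suc j))"
    by (intro sum_mono trm)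
  also have "\<dots> = 4 powr s * (\<Sum>j\<in>F'. D j powr s) + 2 powr s * \<eta> * (\<Sum>j\<in>F'. 1 / 2 ^ Suc j)"
    by (simp add: sum.distrib sum_distrib_left)
  also have "\<dots> \<le> 4 powr s * (\<Sum>j. D j powr s) + 2 powr s * \<eta> * 1"
  proof (intro add_mono mult_left_mono)
    show "(\<Sum>j\<in>F'. D j powr s) \<le> (\<Sum>j. D j powr s)"
      using sm unfolding D_def by (intro sum_le_suminf F'fin) auto
    show "(\<Sum>j\<in>F'. 1 / 2 ^ Suc j) \<le> (1::real)" by (rule geo_half_le[OF F'fin])
  qed (use \<eta> in auto)
  finally have "(\<Sum>j\<in>F'. diameter (V j) powr s) \<le> 4 powr s * (\<Sum>j. diameter (U j) powr s) + 2 powr s * \<eta>"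
    unfolding D_def by simp
  then have "2 ^ ?d * (\<Sum>j\<in>F'. diameter (V j) powr s) \<le> 2 ^ ?d * (4 powr s * (\<Sum>j. diameter (U j) powr s) + 2 powr s * \<eta>)"
    by (intro mult_left_mono) auto
  with main have "1 / 2 ^ (n * ?d) \<le> 2 ^ ?d * (4 powr s * (\<Sum>j. diameter (U j) powr s) + 2 powr s * \<eta>)"
    by linarith
  then show ?thesis by (simp add: field_simps)
qed



lemma pre_LB:
  fixes \<beta> :: "'n::finite \<Rightarrow> nat set"
  assumes s: "s = real CARD('n) * ln 2 / ln 3"
    and \<beta>: "\<beta> \<in> Addr n" and \<delta>: "\<delta> \<le> 1/8"
  shows "ennreal (1 / (2 ^ (n * CARD('n)) * 2 ^ CARD('n) * 4 powr s))
          \<le> hausdorff_pre s \<delta> (cantor_dust \<inter> cube n \<beta>)"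
  unfolding hausdorff_pre_def
proof (rule INF_greatest)
  fix U :: "nat \<Rightarrow> (real^'n) set"
  assume "U \<in> {U. cantor_dust \<inter> cube n \<beta> \<subseteq> (\<Union>i. U i) \<and> (\<forall>i. bounded (U i) \<and> diameter (U i) \<le> \<delta>)}"
  then have cov: "cantor_dust \<inter> cube n \<beta> \<subseteq> (\<Union>j. U j)" and props: "\<And>j. bounded (U j) \<and> diameter (U j) \<le> \<delta>"
    by auto
  let ?c = "1 / (2 ^ (n * CARD('n)) * 2 ^ CARD('n)) :: real"
  let ?X = "\<Sum>j. diameter (U j) powr s"
  show "ennreal (1 / (2 ^ (n * CARD('n)) * 2 ^ CARD('n) * 4 powr s)) \<le> (\<Sum>j. ennreal (diameter (U j) powr s))"
  proof (cases "summable (\<lambda>j. diameter (U j) powr s)")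
    case sm: True
    have key: "?c \<le> 4 powr s * ?X"
    proof (rule ccontr)
      assume "\<not> ?c \<le> 4 powr s * ?X"
      then have lt: "4 powr s * ?X < ?c" by simp
      define \<eta> where "\<eta> = min ((1/4) powr s) ((?c - 4 powr s * ?X) / (2 * 2 powr s))"
      have \<eta>pos: "0 < \<eta>" unfolding \<eta>_def using lt by auto
      have \<eta>le: "\<eta> \<le> (1/4) powr s" unfolding \<eta>_def by simp
      have \<eta>le2: "2 powr s * \<eta> \<le> (?c - 4 powr s * ?X) / 2"
      proof -
        have "\<eta> \<le> (?c - 4 powr s * ?X) / (2 * 2 powr s)" unfolding \<eta>_def by simp
        then have "2 powr s * \<eta> \<le> 2 powr s * ((?c - 4 powr s * ?X) / (2 * 2 powr s))"
          by (intro mult_left_mono) auto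
        also have "\<dots> = (?c - 4 powr s * ?X) / 2" by simp
        finally show ?thesis .
      qed
      have lbr: "?c \<le> 4 powr s * ?X + 2 powr s * \<eta>"
        by (rule LB_real[OF s \<beta> \<delta> cov props sm \<eta>pos \<eta>le])
      have aux: "c \<le> y + z \<Longrightarrow> z \<le> (c - y) / 2 \<Longrightarrow> y < c \<Longrightarrow> False" for c y z :: real by (simp add: field_simps)
      from aux[OF lbr \<eta>le2 lt] show False .
    qed
    have "1 / (2 ^ (n * CARD('n)) * 2 ^ CARD('n) * 4 powr s) = ?c / 4 powr s" by simp
    also have "\<dots> \<le> ?X"
    proof -
      have p4: "0 < (4::real) powr s" by simp
      have "?X * 4 powr s = 4 powr s * ?X" by (rule mult.commute)
      then have "?c \<le> ?X * 4 powr s" using key by linarith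
      then show ?thesis by (simp only: pos_divide_le_eq[OF p4])
    qed
    finally have r: "1 / (2 ^ (n * CARD('n)) * 2 ^ CARD('n) * 4 powr s) \<le> ?X" .
    have eq: "(\<Sum>j. ennreal (diameter (U j) powr s)) = ennreal ?X"
      by (rule suminf_ennreal2[OF _ sm]) simp
    show ?thesis unfolding eq by (rule ennreal_leI[OF r])
  next
    case False
    have "(\<Sum>j. ennreal (diameter (U j) powr s)) = top"
    proof (rule ccontr)
      assume "(\<Sum>j. ennreal (diameter (U j) powr s)) \<noteq> top"
      then have "summable (\<lambda>j. diameter (U j) powr s)"
        by (rule summable_suminf_not_top[rotated]) simp
      with False show False by contradiction
    qed
    then show ?thesis by (simp only: top_greatest)
  qed
qed

lemma H_LB:
  fixes \<beta> :: "'n::finite \<Rightarrow> nat set"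
  assumes s: "s = real CARD('n) * ln 2 / ln 3" and \<beta>: "\<beta> \<in> Addr n"
  shows "ennreal (1 / (2 ^ (n * CARD('n)) * 2 ^ CARD('n) * 4 powr s))
          \<le> hausdorff_measure s (cantor_dust \<inter> cube n \<beta>)"
  unfolding hausdorff_measure_def
  by (rule SUP_upper2[of "1/8"]) (simp, rule pre_LB[OF s \<beta>], simp)

lemma pre_exp_mono:
  fixes A :: "'a::metric_space set"
  assumes "t \<le> s" "\<delta> \<le> 1"
  shows "hausdorff_pre s \<delta> A \<le> hausdorff_pre t \<delta> A"
  unfolding hausdorff_pre_def
proof (rule INF_mono)
  fix U :: "nat \<Rightarrow> 'a set" assume U: "U \<in> {U. A \<subseteq> (\<Union>i. U i) \<and> (\<forall>i. bounded (U i) \<and> diameter (U i) \<le> \<delta>)}"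
  have "(\<Sum>i. ennreal (diameter (U i) powr s)) \<le> (\<Sum>i. ennreal (diameter (U i) powr t))"
  proof (rule suminf_le)
    fix i
    have "diameter (U i) \<le> \<delta>" "bounded (U i)" using U by auto
    then have "0 \<le> diameter (U i)" "diameter (U i) \<le> 1" using assms(2) diameter_ge_0 by auto
    then show "ennreal (diameter (U i) powr s) \<le> ennreal (diameter (U i) powr t)"
      by (intro ennreal_leI powr_mono' assms(1))
  qed auto
  then show "\<exists>V\<in>{U. A \<subseteq> (\<Union>i. U i) \<and> (\<forall>i. bounded (U i) \<and> diameter (U i) \<le> \<delta>)}.
      (\<Sum>i. ennreal (diameter (V i) powr s)) \<le> (\<Sum>i. ennreal (diameter (U i) powr t))"
    using U by blast
qed

lemma H_pos:
  assumes s: "s = real CARD('n::finite) * ln 2 / ln 3" and t: "t \<le> s"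
  shows "hausdorff_measure t (cantor_dust :: (real^'n) set) \<noteq> 0"
proof -
  let ?K = "cantor_dust :: (real^'n) set"
  let ?c = "1 / (2 ^ (0 * CARD('n)) * 2 ^ CARD('n) * 4 powr s) :: real"
  have b0: "(\<lambda>_. {}) \<in> (Addr 0 :: ('n \<Rightarrow> nat set) set)" unfolding Addr_def by auto
  have "ennreal ?c \<le> hausdorff_pre s (1/8) (?K \<inter> cube 0 (\<lambda>_. {}))"
    by (rule pre_LB[OF s b0]) simp
  also have "\<dots> \<le> hausdorff_pre s (1/8) ?K" by (rule pre_mono) auto
  also have "\<dots> \<le> hausdorff_pre t (1/8) ?K" by (rule pre_exp_mono[OF t]) simp
  also have "\<dots> \<le> hausdorff_measure t ?K" unfolding hausdorff_measure_def
    by (rule SUP_upper) simp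
  finally have "ennreal ?c \<le> hausdorff_measure t ?K" .
  moreover have "0 < ?c" by simp
  ultimately show ?thesis
  proof (intro notI)
    assume h: "ennreal ?c \<le> hausdorff_measure t ?K" "0 < ?c" "hausdorff_measure t ?K = 0"
    then have "ennreal ?c \<le> 0" by simp
    then have "ennreal ?c = 0" by (rule antisym) simp
    then have "?c \<le> 0" by (simp only: ennreal_eq_0_iff)
    then show False using h(2) by linarith
  qed
qed

lemma dim_eq:
  assumes s: "s = real CARD('n::finite) * ln 2 / ln 3"
  shows "hausdorff_dim (cantor_dust :: (real^'n) set) = s"
proof -
  let ?K = "cantor_dust :: (real^'n) set"
  let ?Z = "{t. t \<ge> 0 \<and> hausdorff_measure t ?K = 0}"
  have sp: "0 < s" using s by simp
  have inZ: "t \<in> ?Z" if "s < t" for t using H_zero[OF s that] that sp by auto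
  have ne: "?Z \<noteq> {}" using inZ[of "s+1"] by auto
  have lb: "s \<le> t" if "t \<in> ?Z" for t
  proof (rule ccontr)
    assume "\<not> s \<le> t"
    then have "t \<le> s" by simp
    then show False using H_pos[OF s] that by auto
  qed
  have bdd: "bdd_below ?Z" by (rule bdd_belowI[of _ 0]) auto
  have "s \<le> Inf ?Z" by (rule cInf_greatest[OF ne lb])
  moreover have "Inf ?Z \<le> s"
  proof (rule dense_ge)
    fix y assume "s < y"
    then show "Inf ?Z \<le> y" by (intro cInf_lower inZ bdd)
  qed
  ultimately show ?thesis unfolding hausdorff_dim_def by simp
qed



lemma greedy:
  fixes V :: "(real^'n::finite) set"
  assumes "subspace V" "dim V \<le> k"
  shows "\<exists>J. card J \<le> dim V \<and> (\<forall>v\<in>V. \<forall>i. \<bar>v $ i\<bar> \<le> (real CARD('n) + 2) ^ k * (\<Sum>j\<in>J. \<bar>v $ j\<bar>))"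
  using assms
proof (induction k arbitrary: V)
  case 0
  then have "V \<subseteq> {0}" by simp
  then show ?case by (intro exI[of _ "{}"]) auto
next
  case (Suc k)
  let ?d = "real CARD('n)"
  show ?case
  proof (cases "V \<subseteq> {0}")
    case True
    then show ?thesis by (intro exI[of _ "{}"]) auto
  next
    case False
    then obtain w where w: "w \<in> V" "w \<noteq> 0" by auto
    obtain i0 where i0: "\<And>i. \<bar>w $ i\<bar> \<le> \<bar>w $ i0\<bar>"
    proof -
      have "finite ((\<lambda>i. \<bar>w $ i\<bar>) ` UNIV)" by simp
      have "Max ((\<lambda>i. \<bar>w $ i\<bar>) ` UNIV) \<in> (\<lambda>i. \<bar>w $ i\<bar>) ` (UNIV::'n set)"
        by (rule Max_in) auto
      then obtain i0 where "\<bar>w $ i0\<bar> = Max ((\<lambda>i. \<bar>w $ i\<bar>) ` UNIV)"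
        by (metis (no_types, lifting) imageE)
      moreover have "\<bar>w $ i\<bar> \<le> Max ((\<lambda>i. \<bar>w $ i\<bar>) ` UNIV)" for i by (rule Max_ge) auto
      ultimately show ?thesis using that by metis
    qed
    have wi0: "w $ i0 \<noteq> 0"
    proof
      assume "w $ i0 = 0"
      then have "w $ i = 0" for i using i0[of i] by simp
      then have "w = 0" by (simp add: vec_eq_iff)
      with w(2) show False by simp
    qed
    define u where "u = (1 / w $ i0) *\<^sub>R w"
    have uV: "u \<in> V" unfolding u_def using w(1) Suc.prems(1) by (rule subspace_scale[rotated])
    have ui0: "u $ i0 = 1" unfolding u_def using wi0 by simp
    have ule: "\<bar>u $ i\<bar> \<le> 1" for i
      unfolding u_def using i0[of i] wi0 by (simp add: abs_mult divide_le_eq_1 field_simps)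
    define V' where "V' = {v\<in>V. v $ i0 = 0}"
    have sV': "subspace V'"
      unfolding V'_def subspace_def using Suc.prems(1) unfolding subspace_def by auto
    have "u \<notin> V'" unfolding V'_def using ui0 by auto
    then have "V' \<subset> V" using uV unfolding V'_def by blast
    then have "dim V' < dim V"
      using dim_psubset[of V' V] sV' Suc.prems(1) by (simp add: span_eq_iff[THEN iffD2])
    then have dV': "dim V' \<le> k" using Suc.prems(2) by simp
    from Suc.IH[OF sV' dV'] obtain J' where J': "card J' \<le> dim V'"
      "\<And>v i. v \<in> V' \<Longrightarrow> \<bar>v $ i\<bar> \<le> (?d + 2) ^ k * (\<Sum>j\<in>J'. \<bar>v $ j\<bar>)" by blast
    define J where "J = insert i0 J'"
    have cJ: "card J \<le> dim V"
    proof -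
      have "card J \<le> Suc (card J')" unfolding J_def by (simp add: card_insert_le_m1)
      then show ?thesis using J'(1) \<open>dim V' < dim V\<close> by linarith
    qed
    have G1: "1 \<le> (?d + 2) ^ k" by (rule one_le_power) simp
    have bound: "\<bar>v $ i\<bar> \<le> (?d + 2) ^ Suc k * (\<Sum>j\<in>J. \<bar>v $ j\<bar>)" if v: "v \<in> V" for v i
    proof -
      let ?S = "\<Sum>j\<in>J. \<bar>v $ j\<bar>"
      define v' where "v' = v - (v $ i0) *\<^sub>R u"
      have v'V: "v' \<in> V'" unfolding V'_def v'_def using v uV Suc.prems(1) ui0
        by (auto intro: subspace_diff subspace_scale)
      have fJ: "finite J" by simp
      have i0S: "\<bar>v $ i0\<bar> \<le> ?S" unfolding J_def by (rule member_le_sum) auto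
      have J'S: "(\<Sum>j\<in>J'. \<bar>v $ j\<bar>) \<le> ?S" unfolding J_def by (rule sum_mono2) auto
      have cJ'd: "real (card J') \<le> ?d" by (simp add: card_mono)
      have "(\<Sum>j\<in>J'. \<bar>v' $ j\<bar>) \<le> (\<Sum>j\<in>J'. \<bar>v $ j\<bar> + \<bar>v $ i0\<bar>)"
      proof (rule sum_mono)
        fix j
        have "\<bar>v' $ j\<bar> \<le> \<bar>v $ j\<bar> + \<bar>v $ i0\<bar> * \<bar>u $ j\<bar>" unfolding v'_def by (simp add: abs_mult[symmetric] abs_triangle_ineq4)
        also have "\<dots> \<le> \<bar>v $ j\<bar> + \<bar>v $ i0\<bar>" using ule[of j] by (simp add: mult_left_le)
        finally show "\<bar>v' $ j\<bar> \<le> \<bar>v $ j\<bar> + \<bar>v $ i0\<bar>" .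
      qed
      also have "\<dots> = (\<Sum>j\<in>J'. \<bar>v $ j\<bar>) + real (card J') * \<bar>v $ i0\<bar>" by (simp add: sum.distrib)
      also have "\<dots> \<le> ?S + ?d * ?S"
        using J'S i0S cJ'd by (intro add_mono mult_mono) auto
      finally have sv': "(\<Sum>j\<in>J'. \<bar>v' $ j\<bar>) \<le> (?d + 1) * ?S" by (simp add: algebra_simps)
      have "\<bar>v $ i\<bar> \<le> \<bar>v' $ i\<bar> + \<bar>v $ i0\<bar> * \<bar>u $ i\<bar>"
        unfolding v'_def by (simp add: abs_mult[symmetric] abs_triangle_ineq4)
      also have "\<dots> \<le> (?d + 2) ^ k * ((?d + 1) * ?S) + ?S"
      proof (rule add_mono)
        have "\<bar>v' $ i\<bar> \<le> (?d + 2) ^ k * (\<Sum>j\<in>J'. \<bar>v' $ j\<bar>)" by (rule J'(2)[OF v'V])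
        also have "\<dots> \<le> (?d + 2) ^ k * ((?d + 1) * ?S)" by (intro mult_left_mono sv') simp
        finally show "\<bar>v' $ i\<bar> \<le> (?d + 2) ^ k * ((?d + 1) * ?S)" .
        show "\<bar>v $ i0\<bar> * \<bar>u $ i\<bar> \<le> ?S" using ule[of i] i0S by (smt (verit) abs_ge_zero mult_left_le)
      qed
      also have "\<dots> \<le> (?d + 2) ^ k * ((?d + 1) * ?S) + (?d + 2) ^ k * ?S"
      proof (rule add_left_mono)
        have "0 \<le> ?S" by (rule sum_nonneg) simp
        then show "?S \<le> (?d + 2) ^ k * ?S" using mult_right_mono[OF G1 \<open>0 \<le> ?S\<close>] by simp
      qed
      also have "\<dots> = (?d + 2) ^ Suc k * ?S" by (simp add: algebra_simps)
      finally show ?thesis .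
    qed
    show ?thesis using cJ bound by blast
  qed
qed



lemma card_close_1d:
  fixes x :: real and R :: nat
  shows "card {B. B \<subseteq> {..<n} \<and> \<bar>cval B - x\<bar> \<le> R / 3 ^ n} \<le> 2 * R + 1"
proof -
  let ?W = "{B. B \<subseteq> {..<n} \<and> \<bar>cval B - x\<bar> \<le> R / 3 ^ n}"
  define y where "y B = (cval B - x + R / 3 ^ n) * 3 ^ n" for B
  define g where "g B = nat \<lfloor>y B\<rfloor>" for B
  have fW: "finite ?W" by (rule finite_subset[of _ "Pow {..<n}"]) auto
  have yr: "0 \<le> y B \<and> y B \<le> 2 * R" if "B \<in> ?W" for B
  proof -
    have "- (R / 3 ^ n) \<le> cval B - x" "cval B - x \<le> R / 3 ^ n" using that by auto
    then have "0 \<le> cval B - x + R / 3 ^ n" "cval B - x + R / 3 ^ n \<le> 2 * (R / 3 ^ n)" by linarith+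
    then have "0 \<le> (cval B - x + R / 3 ^ n) * 3 ^ n" "(cval B - x + R / 3 ^ n) * 3 ^ n \<le> 2 * (R / 3 ^ n) * 3 ^ n"
      by (simp, intro mult_right_mono, simp_all)
    moreover have "2 * (R / 3 ^ n) * 3 ^ n = 2 * real R" by simp
    ultimately show ?thesis unfolding y_def by linarith
  qed
  have inj: "inj_on g ?W"
  proof (rule inj_onI, rule ccontr)
    fix B B' assume B: "B \<in> ?W" and B': "B' \<in> ?W" and e: "g B = g B'" and ne: "B \<noteq> B'"
    have "B \<inter> {..<n} \<noteq> B' \<inter> {..<n}" using B B' ne by auto
    then have sep: "1 / 3 ^ n \<le> \<bar>cval B - cval B'\<bar>" by (rule cval_sep)
    have "y B - y B' = (cval B - cval B') * 3 ^ n" unfolding y_def by (simp add: algebra_simps)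
    then have "\<bar>y B - y B'\<bar> = \<bar>cval B - cval B'\<bar> * 3 ^ n" by (simp add: abs_mult)
    moreover have "1 / 3 ^ n * 3 ^ n \<le> \<bar>cval B - cval B'\<bar> * 3 ^ n" using sep by (intro mult_right_mono) auto
    ultimately have d1: "1 \<le> \<bar>y B - y B'\<bar>" by simp
    have "0 \<le> \<lfloor>y B\<rfloor>" "0 \<le> \<lfloor>y B'\<rfloor>" using yr[OF B] yr[OF B'] by simp_all
    moreover have "int (nat \<lfloor>y B\<rfloor>) = int (nat \<lfloor>y B'\<rfloor>)" using e unfolding g_def by simp
    ultimately have "\<lfloor>y B\<rfloor> = \<lfloor>y B'\<rfloor>" by simp
    moreover have "of_int \<lfloor>y B\<rfloor> \<le> y B" "y B < of_int \<lfloor>y B\<rfloor> + 1" by linarith+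
    moreover have "of_int \<lfloor>y B'\<rfloor> \<le> y B'" "y B' < of_int \<lfloor>y B'\<rfloor> + 1" by linarith+
    ultimately show False using d1 by linarith
  qed
  have img: "g ` ?W \<subseteq> {0..2 * R}"
  proof
    fix z assume "z \<in> g ` ?W"
    then obtain B where B: "B \<in> ?W" "z = g B" by auto
    have "\<lfloor>y B\<rfloor> \<le> \<lfloor>real (2 * R)\<rfloor>" using yr[OF B(1)] by (intro floor_mono) simp
    moreover have "\<lfloor>real (2 * R)\<rfloor> = int (2 * R)" by (rule floor_of_nat)
    ultimately have "\<lfloor>y B\<rfloor> \<le> int (2 * R)" by simp
    then show "z \<in> {0..2 * R}" using B(2) unfolding g_def by simp
  qed
  have "card ?W = card (g ` ?W)" using card_image[OF inj] by simp
  also have "\<dots> \<le> card {0..2 * R}" by (intro card_mono img) simp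
  finally show ?thesis by simp
qed

lemma card_close:
  fixes x :: "'n::finite \<Rightarrow> real" and R :: nat
  shows "card {\<beta> \<in> Addr n. \<forall>i. \<bar>cval (\<beta> i) - x i\<bar> \<le> R / 3 ^ n} \<le> (2 * R + 1) ^ CARD('n)"
proof -
  let ?W = "\<lambda>i. {B. B \<subseteq> {..<n} \<and> \<bar>cval B - x i\<bar> \<le> R / 3 ^ n}"
  have sub: "{\<beta> \<in> Addr n. \<forall>i. \<bar>cval (\<beta> i) - x i\<bar> \<le> R / 3 ^ n} \<subseteq> PiE UNIV ?W"
    unfolding Addr_def by auto
  have fin: "finite (PiE (UNIV::'n set) ?W)"
    by (intro finite_PiE) (auto intro: finite_subset[of _ "Pow {..<n}"])
  have "card {\<beta> \<in> Addr n. \<forall>i. \<bar>cval (\<beta> i) - x i\<bar> \<le> R / 3 ^ n} \<le> card (PiE (UNIV::'n set) ?W)"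
    by (rule card_mono[OF fin sub])
  also have "\<dots> = (\<Prod>i\<in>UNIV. card (?W i))" by (rule card_PiE) simp
  also have "\<dots> \<le> (\<Prod>i\<in>(UNIV::'n set). 2 * R + 1)"
  proof (rule prod_mono)
    fix i :: 'n
    show "0 \<le> card (?W i) \<and> card (?W i) \<le> 2 * R + 1" using card_close_1d[of n "x i" R] by simp
  qed
  also have "\<dots> = (2 * R + 1) ^ card (UNIV::'n set)" by simp
  finally show ?thesis by simp
qed

lemma card_restrict:
  assumes "T \<subseteq> Addr n"
  shows "card ((\<lambda>\<beta>::'n::finite \<Rightarrow> nat set. \<lambda>i. if i \<in> J then \<beta> i else {}) ` T) \<le> 2 ^ (n * card J)"
proof -
  let ?f = "\<lambda>\<beta>::'n \<Rightarrow> nat set. \<lambda>i. if i \<in> J then \<beta> i else {}"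
  let ?h = "\<lambda>\<gamma>::'n \<Rightarrow> nat set. restrict \<gamma> J"
  have inj: "inj_on ?h (?f ` T)"
  proof (rule inj_onI)
    fix a b assume "a \<in> ?f ` T" "b \<in> ?f ` T" "?h a = ?h b"
    then show "a = b" by (auto simp: fun_eq_iff restrict_def split: if_splits)
  qed
  have sub: "?h ` (?f ` T) \<subseteq> PiE J (\<lambda>_. Pow {..<n})"
  proof
    fix z assume "z \<in> ?h ` (?f ` T)"
    then obtain \<beta> where b: "\<beta> \<in> T" "z = ?h (?f \<beta>)" by auto
    have "\<beta> i \<subseteq> {..<n}" for i using b(1) assms unfolding Addr_def by auto
    then show "z \<in> PiE J (\<lambda>_. Pow {..<n})" using b(2) by auto
  qed
  have "card (?f ` T) = card (?h ` (?f ` T))" using card_image[OF inj] by simp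
  also have "\<dots> \<le> card (PiE J (\<lambda>_. Pow {..<n}))"
    by (intro card_mono sub finite_PiE) auto
  also have "\<dots> = 2 ^ (n * card J)"
    by (subst card_PiE) (auto simp: card_Pow power_mult)
  finally show ?thesis .
qed

definition Rc :: "'n::finite itself \<Rightarrow> nat" where
  "Rc _ = 3 * (CARD('n) + 2) ^ CARD('n) * CARD('n) + 3"



lemma coord_close:
  fixes x y :: "real^'n::finite"
  assumes "dist y x < e"
  shows "\<bar>y $ i - x $ i\<bar> < e"
proof -
  have "\<bar>(y - x) $ i\<bar> \<le> norm (y - x)" by (rule component_le_norm_cart)
  then show ?thesis using assms by (simp add: dist_norm)
qed

lemma in_cube_coord:
  assumes "x \<in> cantor_dust"
  shows "cval (addr n x i) \<le> x $ i \<and> x $ i \<le> cval (addr n x i) + 1 / 3 ^ n"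
  using in_cube_addr[OF assms, of n] unfolding cube_def by auto

lemma count_nbhd:
  fixes L :: "(real^'n::finite) set"
  assumes L: "affine L" "L \<noteq> {}" "aff_dim L = int m" and \<epsilon>: "0 < \<epsilon>" "\<epsilon> \<le> 1 / 3 ^ n"
  shows "card (addr n ` (nbhd L \<epsilon> \<inter> cantor_dust)) \<le> 2 ^ (n * m) * (2 * Rc TYPE('n) + 1) ^ CARD('n)"
proof -
  let ?d = "real CARD('n)"
  let ?G = "(?d + 2) ^ CARD('n)"
  obtain a where a: "a \<in> L" using L(2) by auto
  define V where "V = (\<lambda>x. x - a) ` L"
  have sV: "subspace V" unfolding V_def by (rule affine_diffs_subspace_subtract[OF L(1) a])
  have "aff_dim L = int (dim V)" unfolding V_def
    by (rule aff_dim_eq_dim_subtract, rule hull_inc[OF a])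
  then have dV: "dim V = m" using L(3) by simp
  obtain J where J: "card J \<le> dim V" "\<And>v i. v \<in> V \<Longrightarrow> \<bar>v $ i\<bar> \<le> ?G * (\<Sum>j\<in>J. \<bar>v $ j\<bar>)"
    using greedy[OF sV dim_subset_UNIV_cart[of V]] by blast
  let ?T = "addr n ` (nbhd L \<epsilon> \<inter> cantor_dust)"
  let ?f = "\<lambda>\<beta>::'n \<Rightarrow> nat set. \<lambda>i. if i \<in> J then \<beta> i else {}"
  let ?R = "Rc TYPE('n)"
  have TA: "?T \<subseteq> Addr n" by (auto simp: addr_in_Addr)
  have fT: "finite ?T" by (rule finite_subset[OF TA finite_Addr])
  have fib: "card {\<beta> \<in> ?T. ?f \<beta> = \<gamma>} \<le> (2 * ?R + 1) ^ CARD('n)" if gam: "\<gamma> \<in> ?f ` ?T" for \<gamma>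
  proof -
    obtain q0 where q0: "q0 \<in> nbhd L \<epsilon> \<inter> cantor_dust" "?f (addr n q0) = \<gamma>" using gam by blast
    obtain y0 where y0: "y0 \<in> L" "dist y0 q0 < \<epsilon>" using q0(1) unfolding nbhd_def by auto
    have sub: "{\<beta> \<in> ?T. ?f \<beta> = \<gamma>} \<subseteq> {\<beta> \<in> Addr n. \<forall>i. \<bar>cval (\<beta> i) - cval (addr n q0 i)\<bar> \<le> ?R / 3 ^ n}"
    proof
      fix \<beta> assume b: "\<beta> \<in> {\<beta> \<in> ?T. ?f \<beta> = \<gamma>}"
      then obtain q where q: "q \<in> nbhd L \<epsilon> \<inter> cantor_dust" "\<beta> = addr n q" by auto
      obtain y where y: "y \<in> L" "dist y q < \<epsilon>" using q(1) unfolding nbhd_def by auto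
      have eqJ: "addr n q j = addr n q0 j" if "j \<in> J" for j
      proof -
        have "?f (addr n q) = \<gamma>" using b q(2) by simp
        then have "?f (addr n q) = ?f (addr n q0)" using q0(2) by simp
        then have "?f (addr n q) j = ?f (addr n q0) j" by (rule fun_cong)
        then show ?thesis using that by simp
      qed
      define v where "v = y - y0"
      have vV: "v \<in> V"
      proof -
        have "y - a \<in> V" "y0 - a \<in> V" unfolding V_def using y(1) y0(1) by auto
        then have "(y - a) - (y0 - a) \<in> V" by (rule subspace_diff[OF sV])
        then show ?thesis unfolding v_def by simp
      qed
      have cq: "cval (addr n q i) \<le> q $ i \<and> q $ i \<le> cval (addr n q i) + 1 / 3 ^ n" for i
        using in_cube_coord q(1) by blast
      have cq0: "cval (addr n q0 i) \<le> q0 $ i \<and> q0 $ i \<le> cval (addr n q0 i) + 1 / 3 ^ n" for i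
        using in_cube_coord q0(1) by blast
      have yq: "\<bar>y $ i - q $ i\<bar> < \<epsilon>" for i by (rule coord_close[OF y(2)])
      have yq0: "\<bar>y0 $ i - q0 $ i\<bar> < \<epsilon>" for i by (rule coord_close[OF y0(2)])
      have vJ: "\<bar>v $ j\<bar> \<le> 3 / 3 ^ n" if "j \<in> J" for j
      proof -
        have "\<bar>q $ j - q0 $ j\<bar> \<le> 1 / 3 ^ n" using cq[of j] cq0[of j] eqJ[OF that] by auto
        moreover have "v $ j = (y $ j - q $ j) + (q $ j - q0 $ j) - (y0 $ j - q0 $ j)" unfolding v_def by simp
        ultimately show ?thesis using yq[of j] yq0[of j] \<epsilon>(2) by (simp add: abs_le_iff abs_less_iff)
      qed
      have "(\<Sum>j\<in>J. \<bar>v $ j\<bar>) \<le> real (card J) * (3 / 3 ^ n)"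
        using sum_bounded_above[of J "\<lambda>j. \<bar>v $ j\<bar>" "3 / 3 ^ n"] vJ by simp
      also have "\<dots> \<le> ?d * (3 / 3 ^ n)" by (intro mult_right_mono) (simp_all add: card_mono)
      finally have sJ: "(\<Sum>j\<in>J. \<bar>v $ j\<bar>) \<le> ?d * (3 / 3 ^ n)" .
      have G0: "0 \<le> ?G" by simp
      have Rr: "real ?R = 3 * ?G * ?d + 3" unfolding Rc_def by (simp add: add.commute)
      show "\<beta> \<in> {\<beta> \<in> Addr n. \<forall>i. \<bar>cval (\<beta> i) - cval (addr n q0 i)\<bar> \<le> ?R / 3 ^ n}"
      proof (intro CollectI conjI allI)
        show "\<beta> \<in> Addr n" using q(2) by (simp add: addr_in_Addr)
        fix i
        have vi: "\<bar>v $ i\<bar> \<le> ?G * (?d * (3 / 3 ^ n))"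
          using J(2)[OF vV, of i] mult_left_mono[OF sJ G0] by linarith
        have "v $ i = (y $ i - q $ i) + (q $ i - q0 $ i) - (y0 $ i - q0 $ i)" unfolding v_def by simp
        then have "\<bar>q $ i - q0 $ i\<bar> \<le> \<bar>v $ i\<bar> + 2 * \<epsilon>" using yq[of i] yq0[of i] by (simp add: abs_le_iff abs_less_iff) linarith
        then have "\<bar>cval (\<beta> i) - cval (addr n q0 i)\<bar> \<le> ?G * (?d * (3 / 3 ^ n)) + 2 * (1 / 3 ^ n) + 1 / 3 ^ n"
          using cq[of i] cq0[of i] q(2) vi \<epsilon>(2) by (simp add: abs_le_iff) linarith
        also have "\<dots> = ?R / 3 ^ n" unfolding Rr by (simp add: field_simps)
        finally show "\<bar>cval (\<beta> i) - cval (addr n q0 i)\<bar> \<le> ?R / 3 ^ n" .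
      qed
    qed
    have "card {\<beta> \<in> ?T. ?f \<beta> = \<gamma>} \<le> card {\<beta> \<in> Addr n. \<forall>i. \<bar>cval (\<beta> i) - cval (addr n q0 i)\<bar> \<le> ?R / 3 ^ n}"
      by (rule card_mono[OF finite_ext sub])
    also have "\<dots> \<le> (2 * ?R + 1) ^ CARD('n)"
      by (rule card_close[of n "\<lambda>i. cval (addr n q0 i)" ?R])
    finally show ?thesis .
  qed
  have "card ?T \<le> card (?f ` ?T) * (2 * ?R + 1) ^ CARD('n)"
    by (rule card_fibers_le[OF fT fib])
  also have "\<dots> \<le> 2 ^ (n * card J) * (2 * ?R + 1) ^ CARD('n)"
    by (intro mult_right_mono card_restrict[OF TA]) simp
  also have "\<dots> \<le> 2 ^ (n * m) * (2 * ?R + 1) ^ CARD('n)"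
    using J(1) dV by (intro mult_right_mono power_increasing) auto
  finally show ?thesis .
qed



lemma ln_div_ln_0: "((\<lambda>\<epsilon>::real. c / ln \<epsilon>) \<longlongrightarrow> 0) (at_right 0)"
  by (rule tendsto_divide_0[OF tendsto_const filterlim_mono[OF ln_at_0 at_bot_le_at_infinity order_refl]])

lemma ev_lt1: "eventually (\<lambda>\<epsilon>::real. 0 < \<epsilon> \<and> \<epsilon> < 1) (at_right 0)"
  by (subst eventually_at_right[of 0 1]) (auto intro!: exI[of _ 1])

lemma liminf_lower:
  fixes \<phi> :: "real \<Rightarrow> real"
  assumes b: "\<And>\<epsilon>. 0 < \<epsilon> \<Longrightarrow> \<epsilon> < 1 \<Longrightarrow> 0 < \<phi> \<epsilon> \<and> \<phi> \<epsilon> \<le> C * \<epsilon> powr e"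
  shows "ereal e \<le> Liminf (at_right 0) (\<lambda>\<epsilon>. ereal (ln (\<phi> \<epsilon>) / ln \<epsilon>))"
proof (subst le_Liminf_iff, intro allI impI)
  fix y :: ereal assume y: "y < ereal e"
  have key: "eventually (\<lambda>\<epsilon>. e + ln C / ln \<epsilon> \<le> ln (\<phi> \<epsilon>) / ln \<epsilon>) (at_right 0)"
    using ev_lt1
  proof (rule eventually_mono)
    fix \<epsilon> :: real assume \<epsilon>: "0 < \<epsilon> \<and> \<epsilon> < 1"
    have p: "0 < \<phi> \<epsilon>" "\<phi> \<epsilon> \<le> C * \<epsilon> powr e" using b \<epsilon> by auto
    have "0 < C * \<epsilon> powr e" using p by linarith
    moreover have "0 < \<epsilon> powr e" using \<epsilon> by simp
    ultimately have C: "0 < C" by (simp add: zero_less_mult_iff)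
    have "ln (\<phi> \<epsilon>) \<le> ln (C * \<epsilon> powr e)" using p by (intro ln_mono) auto
    also have "\<dots> = ln C + e * ln \<epsilon>" using C \<epsilon> by (simp add: ln_mult)
    finally have l: "ln (\<phi> \<epsilon>) \<le> ln C + e * ln \<epsilon>" .
    have ln0: "ln \<epsilon> < 0" using \<epsilon> by simp
    have "(ln C + e * ln \<epsilon>) / ln \<epsilon> \<le> ln (\<phi> \<epsilon>) / ln \<epsilon>"
      by (rule divide_right_mono_neg[OF l]) (use ln0 in simp)
    moreover have "(ln C + e * ln \<epsilon>) / ln \<epsilon> = e + ln C / ln \<epsilon>" using ln0 by (simp add: field_simps)
    ultimately show "e + ln C / ln \<epsilon> \<le> ln (\<phi> \<epsilon>) / ln \<epsilon>" by simp
  qed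
  show "eventually (\<lambda>\<epsilon>. y < ereal (ln (\<phi> \<epsilon>) / ln \<epsilon>)) (at_right 0)"
  proof (cases y)
    case (real y0)
    then have "y0 - e < 0" using y by simp
    then have "eventually (\<lambda>\<epsilon>. y0 - e < ln C / ln \<epsilon>) (at_right 0)"
      using order_tendstoD(1)[OF ln_div_ln_0[of "ln C"]] by blast
    from eventually_conj[OF key this] show ?thesis
    proof (rule eventually_mono)
      fix \<epsilon> assume "e + ln C / ln \<epsilon> \<le> ln (\<phi> \<epsilon>) / ln \<epsilon> \<and> y0 - e < ln C / ln \<epsilon>"
      then have "y0 < ln (\<phi> \<epsilon>) / ln \<epsilon>" by linarith
      then show "y < ereal (ln (\<phi> \<epsilon>) / ln \<epsilon>)" using real by simp
    qed
  next
    case PInf then show ?thesis using y by simp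
  next
    case MInf then show ?thesis by simp
  qed
qed

lemma liminf_upper:
  fixes \<phi> :: "real \<Rightarrow> real"
  assumes b: "\<And>\<epsilon>. 0 < \<epsilon> \<Longrightarrow> \<epsilon> < 1 \<Longrightarrow> c * \<epsilon> powr e \<le> \<phi> \<epsilon>" and c: "0 < c"
  shows "Liminf (at_right 0) (\<lambda>\<epsilon>. ereal (ln (\<phi> \<epsilon>) / ln \<epsilon>)) \<le> ereal e"
proof (rule dense_ge)
  fix y :: ereal assume y: "ereal e < y"
  have key: "eventually (\<lambda>\<epsilon>. ln (\<phi> \<epsilon>) / ln \<epsilon> \<le> e + ln c / ln \<epsilon>) (at_right 0)"
    using ev_lt1
  proof (rule eventually_mono)
    fix \<epsilon> :: real assume \<epsilon>: "0 < \<epsilon> \<and> \<epsilon> < 1"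
    have p: "c * \<epsilon> powr e \<le> \<phi> \<epsilon>" using b \<epsilon> by auto
    have "ln (c * \<epsilon> powr e) \<le> ln (\<phi> \<epsilon>)" using p c \<epsilon> by (intro ln_mono) auto
    moreover have "ln (c * \<epsilon> powr e) = ln c + e * ln \<epsilon>" using c \<epsilon> by (simp add: ln_mult)
    ultimately have l: "ln c + e * ln \<epsilon> \<le> ln (\<phi> \<epsilon>)" by simp
    have ln0: "ln \<epsilon> < 0" using \<epsilon> by simp
    have "ln (\<phi> \<epsilon>) / ln \<epsilon> \<le> (ln c + e * ln \<epsilon>) / ln \<epsilon>"
      by (rule divide_right_mono_neg[OF l]) (use ln0 in simp)
    moreover have "(ln c + e * ln \<epsilon>) / ln \<epsilon> = e + ln c / ln \<epsilon>" using ln0 by (simp add: field_simps)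
    ultimately show "ln (\<phi> \<epsilon>) / ln \<epsilon> \<le> e + ln c / ln \<epsilon>" by simp
  qed
  show "Liminf (at_right 0) (\<lambda>\<epsilon>. ereal (ln (\<phi> \<epsilon>) / ln \<epsilon>)) \<le> y"
  proof (cases y)
    case (real y0)
    then have "0 < y0 - e" using y by simp
    then have "eventually (\<lambda>\<epsilon>. ln c / ln \<epsilon> < y0 - e) (at_right 0)"
      using order_tendstoD(2)[OF ln_div_ln_0[of "ln c"]] by blast
    from eventually_conj[OF key this] have "eventually (\<lambda>\<epsilon>. ereal (ln (\<phi> \<epsilon>) / ln \<epsilon>) \<le> y) (at_right 0)"
    proof (rule eventually_mono)
      fix \<epsilon> assume "ln (\<phi> \<epsilon>) / ln \<epsilon> \<le> e + ln c / ln \<epsilon> \<and> ln c / ln \<epsilon> < y0 - e"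
      then have "ln (\<phi> \<epsilon>) / ln \<epsilon> \<le> y0" by linarith
      then show "ereal (ln (\<phi> \<epsilon>) / ln \<epsilon>) \<le> y" using real by simp
    qed
    then show ?thesis by (intro Liminf_le) auto
  next
    case PInf then show ?thesis by simp
  next
    case MInf then show ?thesis using y by simp
  qed
qed



lemma exists_n_eps:
  fixes \<epsilon> :: real
  assumes "0 < \<epsilon>" "\<epsilon> \<le> 1"
  shows "\<exists>n. 1 / 3 ^ Suc n < \<epsilon> \<and> \<epsilon> \<le> 1 / 3 ^ n"
proof -
  obtain m where m: "1 / 3 ^ m \<le> \<epsilon> / 2" using exists_m_small[of "\<epsilon>/2" 1 0] assms by auto
  then have m': "1 / 3 ^ m < \<epsilon>" using assms by linarith
  define KS where "KS = {k. k \<le> m \<and> \<epsilon> \<le> 1 / 3 ^ k}"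
  have fKS: "finite KS" unfolding KS_def by auto
  have "0 \<in> KS" unfolding KS_def using assms by auto
  define n where "n = Max KS"
  have nKS: "n \<in> KS" unfolding n_def using Max_in[OF fKS] \<open>0 \<in> KS\<close> by auto
  then have nm: "n \<le> m" and en: "\<epsilon> \<le> 1 / 3 ^ n" unfolding KS_def by auto
  have "n \<noteq> m" using en m' nm by auto
  then have "Suc n \<le> m" using nm by simp
  moreover have "Suc n \<notin> KS" using Max_ge[OF fKS, of "Suc n"] n_def by auto
  ultimately have "1 / 3 ^ Suc n < \<epsilon>" unfolding KS_def by auto
  then show ?thesis using en by blast
qed

lemma pow_ident:
  assumes s: "s = real CARD('n::finite) * ln 2 / ln 3"
  shows "(1 / 3 ^ n) powr (real l * s / real CARD('n)) = 1 / (2::real) ^ (n * l)"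
proof -
  have d0: "0 < real CARD('n)" by simp
  have "((3::real) ^ n) powr (real l * s / real CARD('n)) = ((3::real) ^ n) powr (s * (real l / real CARD('n)))"
    by (simp add: field_simps)
  also have "\<dots> = (((3::real) ^ n) powr s) powr (real l / real CARD('n))" by (simp add: powr_powr)
  also have "\<dots> = ((2::real) ^ (n * CARD('n))) powr (real l / real CARD('n))" by (simp add: pow3m_s[OF s])
  also have "\<dots> = ((2::real) powr real (n * CARD('n))) powr (real l / real CARD('n))"
    by (subst powr_realpow) simp_all
  also have "\<dots> = (2::real) powr (real (n * CARD('n)) * (real l / real CARD('n)))" by (simp add: powr_powr)
  also have "real (n * CARD('n)) * (real l / real CARD('n)) = real (n * l)" using d0 by (simp add: field_simps)
  also have "(2::real) powr real (n * l) = 2 ^ (n * l)" by (rule powr_realpow) simp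
  finally have e: "((3::real) ^ n) powr (real l * s / real CARD('n)) = 2 ^ (n * l)" .
  show ?thesis by (simp add: powr_divide e)
qed

lemma Phi_UB:
  assumes s: "s = real CARD('n::finite) * ln 2 / ln 3" and l: "l \<le> CARD('n)"
    and \<epsilon>: "0 < \<epsilon>" "\<epsilon> \<le> 1"
  shows "(SUP L\<in>affine_subspaces (CARD('n) - l). hausdorff_measure s (nbhd L \<epsilon> \<inter> (cantor_dust :: (real^'n) set)))
    \<le> ennreal (real ((2 * Rc TYPE('n) + 1) ^ CARD('n)) * real CARD('n) powr s * 3 powr (real l * s / real CARD('n))
         * \<epsilon> powr (real l * s / real CARD('n)))"
proof (rule SUP_least)
  let ?e = "real l * s / real CARD('n)"
  let ?A = "real ((2 * Rc TYPE('n) + 1) ^ CARD('n))"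
  fix L :: "(real^'n) set" assume "L \<in> affine_subspaces (CARD('n) - l)"
  then have L: "affine L" "L \<noteq> {}" "aff_dim L = int (CARD('n) - l)" unfolding affine_subspaces_def by auto
  obtain n where n: "1 / 3 ^ Suc n < \<epsilon>" "\<epsilon> \<le> 1 / 3 ^ n" using exists_n_eps[OF \<epsilon>] by blast
  have cnt: "card (addr n ` (nbhd L \<epsilon> \<inter> cantor_dust)) \<le> 2 ^ (n * (CARD('n) - l)) * (2 * Rc TYPE('n) + 1) ^ CARD('n)"
    by (rule count_nbhd[OF L \<epsilon>(1) n(2)])
  have cntr: "real (card (addr n ` (nbhd L \<epsilon> \<inter> cantor_dust))) \<le> 2 ^ (n * (CARD('n) - l)) * ?A"
  proof -
    have "real (card (addr n ` (nbhd L \<epsilon> \<inter> cantor_dust))) \<le> real (2 ^ (n * (CARD('n) - l)) * (2 * Rc TYPE('n) + 1) ^ CARD('n))"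
      using cnt by (simp only: of_nat_le_iff)
    then show ?thesis by simp
  qed
  have ep: "0 \<le> ?e" using s by simp
  have p2: "(2::real) ^ (n * CARD('n)) = 2 ^ (n * (CARD('n) - l)) * 2 ^ (n * l)"
    using l by (simp add: power_add[symmetric] add_mult_distrib2[symmetric])
  have "hausdorff_measure s (nbhd L \<epsilon> \<inter> cantor_dust)
      \<le> ennreal (real (card (addr n ` (nbhd L \<epsilon> \<inter> cantor_dust))) * real CARD('n) powr s / 2 ^ (n * CARD('n)))"
    by (rule H_UB[OF s])
  also have "\<dots> \<le> ennreal (?A * real CARD('n) powr s * 3 powr ?e * \<epsilon> powr ?e)"
  proof (rule ennreal_leI)
    have "real (card (addr n ` (nbhd L \<epsilon> \<inter> cantor_dust))) * real CARD('n) powr s / 2 ^ (n * CARD('n))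
        \<le> 2 ^ (n * (CARD('n) - l)) * ?A * real CARD('n) powr s / 2 ^ (n * CARD('n))"
      using cntr by (intro divide_right_mono mult_right_mono) auto
    also have "\<dots> = ?A * real CARD('n) powr s * (1 / 2 ^ (n * l))" unfolding p2 by simp
    also have "\<dots> = ?A * real CARD('n) powr s * (1 / 3 ^ n) powr ?e" by (simp add: pow_ident[OF s])
    also have "\<dots> \<le> ?A * real CARD('n) powr s * (3 * \<epsilon>) powr ?e"
    proof (intro mult_left_mono powr_mono2 ep)
      have "1 / (3::real) ^ n = 3 * (1 / 3 ^ Suc n)" by simp
      then show "1 / (3::real) ^ n \<le> 3 * \<epsilon>" using n(1) by linarith
    qed auto
    also have "\<dots> = ?A * real CARD('n) powr s * 3 powr ?e * \<epsilon> powr ?e"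
      using \<epsilon> by (simp add: powr_mult)
    finally show "real (card (addr n ` (nbhd L \<epsilon> \<inter> cantor_dust))) * real CARD('n) powr s / 2 ^ (n * CARD('n))
        \<le> ?A * real CARD('n) powr s * 3 powr ?e * \<epsilon> powr ?e" .
  qed
  finally show "hausdorff_measure s (nbhd L \<epsilon> \<inter> cantor_dust) \<le> ennreal (?A * real CARD('n) powr s * 3 powr ?e * \<epsilon> powr ?e)" .
qed

lemma cval_empty: "cval {} = 0"
  unfolding cval_def tdig_def by simp

lemma Phi_LB:
  assumes s: "s = real CARD('n::finite) * ln 2 / ln 3" and l: "l \<le> CARD('n)"
    and \<epsilon>: "0 < \<epsilon>" "\<epsilon> \<le> 1"
  shows "ennreal (1 / (2 ^ (Suc CARD('n) * CARD('n)) * 2 ^ CARD('n) * 4 powr s) * \<epsilon> powr s)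
    \<le> (SUP L\<in>affine_subspaces (CARD('n) - l). hausdorff_measure s (nbhd L \<epsilon> \<inter> (cantor_dust :: (real^'n) set)))"
proof -
  let ?d = "CARD('n)"
  have "CARD('n) - l \<le> dim (UNIV :: (real^'n) set)" by (simp add: dim_UNIV)
  then obtain T :: "(real^'n) set" where T: "subspace T" "dim T = CARD('n) - l"
    using choose_subspace_of_subspace[of "CARD('n) - l" "UNIV :: (real^'n) set"] by blast
  have T0: "0 \<in> T" using subspace_0[OF T(1)] .
  have TA: "T \<in> affine_subspaces (CARD('n) - l)"
    unfolding affine_subspaces_def using T T0 subspace_imp_affine[OF T(1)] aff_dim_subspace[OF T(1)] by auto
  obtain n where n: "1 / 3 ^ Suc n < \<epsilon>" "\<epsilon> \<le> 1 / 3 ^ n" using exists_n_eps[OF \<epsilon>] by blast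
  define N where "N = n + Suc ?d"
  have b0: "(\<lambda>_. {}) \<in> (Addr N :: ('n \<Rightarrow> nat set) set)" unfolding Addr_def by auto
  have cb: "cube N (\<lambda>_::'n. {}) \<subseteq> nbhd T \<epsilon>"
  proof
    fix x :: "real^'n" assume "x \<in> cube N (\<lambda>_. {})"
    then have xi: "0 \<le> x $ i \<and> x $ i \<le> 1 / 3 ^ N" for i unfolding cube_def cval_empty by auto
    have "norm x \<le> (\<Sum>i\<in>UNIV. \<bar>x $ i\<bar>)" by (rule norm_le_l1_cart)
    also have "\<dots> \<le> (\<Sum>i\<in>(UNIV::'n set). 1 / 3 ^ N)" by (intro sum_mono) (use xi in auto)
    also have "\<dots> = real ?d / 3 ^ N" by simp
    also have "\<dots> = (real ?d / 3 ^ ?d) * (1 / 3 ^ Suc n)" unfolding N_def by (simp add: power_add)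
    also have "\<dots> < 1 * (1 / 3 ^ Suc n)"
    proof (rule mult_strict_right_mono)
      have "?d < 2 ^ ?d" by (rule less_exp)
      also have "(2::nat) ^ ?d \<le> 3 ^ ?d" by (rule power_mono) auto
      finally have "real ?d < 3 ^ ?d" by (metis of_nat_less_iff of_nat_numeral of_nat_power)
      then show "real ?d / 3 ^ ?d < 1" by simp
    qed simp
    also have "\<dots> < \<epsilon>" using n(1) by simp
    finally have "x \<in> ball 0 \<epsilon>" by (simp add: dist_norm)
    then show "x \<in> nbhd T \<epsilon>" unfolding nbhd_def using T0 by blast
  qed
  have "ennreal (1 / (2 ^ (N * ?d) * 2 ^ ?d * 4 powr s)) \<le> hausdorff_measure s (cantor_dust \<inter> cube N (\<lambda>_::'n. {}))"
    by (rule H_LB[OF s b0])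
  also have "\<dots> \<le> hausdorff_measure s (nbhd T \<epsilon> \<inter> cantor_dust)" by (rule H_mono) (use cb in auto)
  also have "\<dots> \<le> (SUP L\<in>affine_subspaces (CARD('n) - l). hausdorff_measure s (nbhd L \<epsilon> \<inter> (cantor_dust :: (real^'n) set)))"
    by (rule SUP_upper[OF TA])
  finally have h: "ennreal (1 / (2 ^ (N * ?d) * 2 ^ ?d * 4 powr s)) \<le> (SUP L\<in>affine_subspaces (CARD('n) - l). hausdorff_measure s (nbhd L \<epsilon> \<inter> (cantor_dust :: (real^'n) set)))" .
  have "1 / (2 ^ (Suc ?d * ?d) * 2 ^ ?d * 4 powr s) * \<epsilon> powr s
      \<le> 1 / (2 ^ (Suc ?d * ?d) * 2 ^ ?d * 4 powr s) * (1 / 3 ^ n) powr s"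
    using n(2) \<epsilon> s by (intro mult_left_mono powr_mono2) auto
  also have "(1 / (3::real) ^ n) powr s = 1 / 2 ^ (n * ?d)"
    using pow_ident[OF s, of n ?d] by simp
  also have "1 / (2 ^ (Suc ?d * ?d) * 2 ^ ?d * 4 powr s) * (1 / 2 ^ (n * ?d)) = 1 / (2 ^ (N * ?d) * 2 ^ ?d * 4 powr (s::real))"
    unfolding N_def by (simp add: power_add add_mult_distrib)
  finally have "1 / (2 ^ (Suc ?d * ?d) * 2 ^ ?d * 4 powr s) * \<epsilon> powr s \<le> 1 / (2 ^ (N * ?d) * 2 ^ ?d * 4 powr s)" .
  then have "ennreal (1 / (2 ^ (Suc ?d * ?d) * 2 ^ ?d * 4 powr s) * \<epsilon> powr s) \<le> ennreal (1 / (2 ^ (N * ?d) * 2 ^ ?d * 4 powr s))"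
    by (rule ennreal_leI)
  from this h show ?thesis by (rule order_trans)
qed



lemma phi_bounds:
  assumes s: "s = real CARD('n::finite) * ln 2 / ln 3" and l: "l \<le> CARD('n)"
    and \<epsilon>: "0 < \<epsilon>" "\<epsilon> < 1"
  defines "\<Phi> \<equiv> (SUP L\<in>affine_subspaces (CARD('n) - l). hausdorff_measure s (nbhd L \<epsilon> \<inter> (cantor_dust :: (real^'n) set)))"
  shows "1 / (2 ^ (Suc CARD('n) * CARD('n)) * 2 ^ CARD('n) * 4 powr s) * \<epsilon> powr s \<le> enn2real \<Phi>"
    and "enn2real \<Phi> \<le> real ((2 * Rc TYPE('n) + 1) ^ CARD('n)) * real CARD('n) powr s * 3 powr (real l * s / real CARD('n))
         * \<epsilon> powr (real l * s / real CARD('n))"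
proof -
  let ?U = "real ((2 * Rc TYPE('n) + 1) ^ CARD('n)) * real CARD('n) powr s * 3 powr (real l * s / real CARD('n))
         * \<epsilon> powr (real l * s / real CARD('n))"
  let ?L = "1 / (2 ^ (Suc CARD('n) * CARD('n)) * 2 ^ CARD('n) * 4 powr s) * \<epsilon> powr s"
  have up: "\<Phi> \<le> ennreal ?U" unfolding \<Phi>_def by (rule Phi_UB[OF s l \<epsilon>(1)]) (use \<epsilon> in simp)
  have lo: "ennreal ?L \<le> \<Phi>" unfolding \<Phi>_def by (rule Phi_LB[OF s l \<epsilon>(1)]) (use \<epsilon> in simp)
  have top: "\<Phi> < top" using up by (rule le_less_trans) simp
  have U0: "0 \<le> ?U" by simp
  have L0: "0 \<le> ?L" by simp
  show "?L \<le> enn2real \<Phi>" using enn2real_mono[OF lo top] L0 by simp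
  show "enn2real \<Phi> \<le> ?U" using enn2real_mono[OF up] U0 by simp
qed

lemma alpha_lower:
  assumes s: "s = real CARD('n::finite) * ln 2 / ln 3" and l: "l \<le> CARD('n)"
  shows "ereal (real l * s / real CARD('n)) \<le> Liminf (at_right 0) (\<lambda>\<epsilon>. ereal (ln (enn2real
      (SUP L\<in>affine_subspaces (CARD('n) - l). hausdorff_measure s (nbhd L \<epsilon> \<inter> (cantor_dust :: (real^'n) set)))) / ln \<epsilon>))"
proof (rule liminf_lower)
  fix \<epsilon> :: real assume \<epsilon>: "0 < \<epsilon>" "\<epsilon> < 1"
  note b = phi_bounds[OF s l \<epsilon>]
  have pos: "0 < 1 / (2 ^ (Suc CARD('n) * CARD('n)) * 2 ^ CARD('n) * 4 powr s) * \<epsilon> powr s" using \<epsilon> by simp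
  show "0 < enn2real (SUP L\<in>affine_subspaces (CARD('n) - l). hausdorff_measure s (nbhd L \<epsilon> \<inter> (cantor_dust :: (real^'n) set))) \<and>
     enn2real (SUP L\<in>affine_subspaces (CARD('n) - l). hausdorff_measure s (nbhd L \<epsilon> \<inter> (cantor_dust :: (real^'n) set)))
     \<le> real ((2 * Rc TYPE('n) + 1) ^ CARD('n)) * real CARD('n) powr s * 3 powr (real l * s / real CARD('n)) * \<epsilon> powr (real l * s / real CARD('n))"
  proof (intro conjI)
    show "0 < enn2real (SUP L\<in>affine_subspaces (CARD('n) - l). hausdorff_measure s (nbhd L \<epsilon> \<inter> (cantor_dust :: (real^'n) set)))"
      using b(1) pos by linarith
  qed (rule b(2))
qed

lemma alpha_upper:
  assumes s: "s = real CARD('n::finite) * ln 2 / ln 3"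
  shows "Liminf (at_right 0) (\<lambda>\<epsilon>. ereal (ln (enn2real
      (SUP L\<in>affine_subspaces (CARD('n) - CARD('n)). hausdorff_measure s (nbhd L \<epsilon> \<inter> (cantor_dust :: (real^'n) set)))) / ln \<epsilon>))
     \<le> ereal s"
proof (rule liminf_upper)
  fix \<epsilon> :: real assume \<epsilon>: "0 < \<epsilon>" "\<epsilon> < 1"
  show "1 / (2 ^ (Suc CARD('n) * CARD('n)) * 2 ^ CARD('n) * 4 powr s) * \<epsilon> powr s \<le> enn2real
      (SUP L\<in>affine_subspaces (CARD('n) - CARD('n)). hausdorff_measure s (nbhd L \<epsilon> \<inter> (cantor_dust :: (real^'n) set)))"
    by (rule phi_bounds(1)[OF s order_refl \<epsilon>])
qed simp

lemma alpha_unfold: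
  "alpha l (\<lambda>A. hausdorff_measure s (A \<inter> (cantor_dust :: (real^'n::finite) set)))
   = Liminf (at_right 0) (\<lambda>\<epsilon>. ereal (ln (enn2real
      (SUP L\<in>affine_subspaces (CARD('n) - l). hausdorff_measure s (nbhd L \<epsilon> \<inter> (cantor_dust :: (real^'n) set)))) / ln \<epsilon>))"
  unfolding alpha_def by simp

theorem mainTheorem2:
  fixes K :: "(real ^ 'n) set" and s :: real and \<mu> :: "(real ^ 'n) set \<Rightarrow> ennreal"
  assumes "K = cantor_dust"
    and "s = hausdorff_dim K"
    and "\<mu> = (\<lambda>A. hausdorff_measure s (A \<inter> K))"
  shows "(MIN l\<in>{1..CARD('n)}. alpha l \<mu> * ereal (real (CARD('n) - l + 1))) = ereal s
         \<and> s = real CARD('n) * ln 2 / ln 3"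
proof -
  let ?d = "CARD('n)"
  define s0 where "s0 = real ?d * ln 2 / ln 3"
  have s_eq: "s = s0" using assms(1,2) dim_eq[OF s0_def] by simp
  have s0p: "0 < s0" unfolding s0_def by simp
  have mu: "\<mu> = (\<lambda>A. hausdorff_measure s0 (A \<inter> cantor_dust))" using assms(1,3) s_eq by simp
  have ge: "ereal s0 \<le> alpha l \<mu> * ereal (real (?d - l + 1))" if l: "l \<in> {1..?d}" for l
  proof -
    have l1: "1 \<le> l" and ld: "l \<le> ?d" using l by auto
    have a: "ereal (real l * s0 / real ?d) \<le> alpha l \<mu>"
      unfolding mu alpha_unfold by (rule alpha_lower[OF s0_def ld])
    have r: "real (?d - l + 1) = real ?d - real l + 1" using ld by (simp add: of_nat_diff)
    have "0 \<le> (real l - 1) * (real ?d - real l)" using l1 ld by (intro mult_nonneg_nonneg) auto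
    moreover have "real l * (real ?d - real l + 1) - real ?d = (real l - 1) * (real ?d - real l)"
      by (simp add: algebra_simps)
    ultimately have q: "real ?d \<le> real l * (real ?d - real l + 1)" by linarith
    have d0: "0 < real ?d" by simp
    have "1 \<le> real l * (real ?d - real l + 1) / real ?d" using q d0 by (simp add: le_divide_eq)
    then have "s0 * 1 \<le> s0 * (real l * (real ?d - real l + 1) / real ?d)"
      using s0p by (intro mult_left_mono) auto
    also have "\<dots> = real l * s0 / real ?d * real (?d - l + 1)" unfolding r by (simp add: field_simps)
    finally have "ereal s0 \<le> ereal (real l * s0 / real ?d) * ereal (real (?d - l + 1))" by simp
    also have "\<dots> \<le> alpha l \<mu> * ereal (real (?d - l + 1))"
      by (rule ereal_mult_right_mono[OF a]) simp
    finally show ?thesis .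
  qed
  have eqd: "alpha ?d \<mu> = ereal s0"
  proof -
    have "ereal (real ?d * s0 / real ?d) \<le> alpha ?d \<mu>"
      unfolding mu alpha_unfold by (rule alpha_lower[OF s0_def order_refl])
    moreover have "alpha ?d \<mu> \<le> ereal s0"
      unfolding mu alpha_unfold by (rule alpha_upper[OF s0_def])
    ultimately show ?thesis by simp
  qed
  have "(MIN l\<in>{1..?d}. alpha l \<mu> * ereal (real (?d - l + 1))) = ereal s0"
  proof (rule Min_eqI)
    show "finite ((\<lambda>l. alpha l \<mu> * ereal (real (?d - l + 1))) ` {1..?d})" by simp
    show "\<And>y. y \<in> (\<lambda>l. alpha l \<mu> * ereal (real (?d - l + 1))) ` {1..?d} \<Longrightarrow> ereal s0 \<le> y"
    proof -
      fix y assume "y \<in> (\<lambda>l. alpha l \<mu> * ereal (real (?d - l + 1))) ` {1..?d}"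
      then obtain l where "l \<in> {1..?d}" "y = alpha l \<mu> * ereal (real (?d - l + 1))" by blast
      then show "ereal s0 \<le> y" using ge by simp
    qed
    show "ereal s0 \<in> (\<lambda>l. alpha l \<mu> * ereal (real (?d - l + 1))) ` {1..?d}"
      by (rule image_eqI[where x = "?d"]) (simp_all add: eqd)
  qed
  then show ?thesis using s_eq unfolding s0_def by simp
qed

end
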